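(* Let $C_\#$ be the bivariate copula with density \[ c_\#(u,v)=2\big(\mathbf{1}_{[0,\frac12)}(u)\mathbf{1}_{[\frac12,1]}(v)+\mathbf{1}_{[\frac12,1]}(u)\mathbf{1}_{[0,\frac12)}(v)\big). \] Then $\psi(C_\#)=-\frac12$ and $\xi(C_\#)=\frac12$. Moreover, for every bivariate copula $C$ with $\psi(C)=-\frac12$ one has $\xi(C)\ge\frac12$, with equality if and only if $C=C_\#$.
   Context: For a bivariate copula $C$: $\xi(C)=6\int_0^1\int_0^1(\partial_1C(u,v))^2\,du\,dv-2$ and $\psi(C)=6\int_0^1C(u,u)\,du-2$; $-\frac12$ is the smallest possible value of $\psi$ over all copulas. *)

theory Defs
  imports "HOL-Analysis.Analysis"
begin

text \<open>A bivariate copula, represented by its values on the unit square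
  (values outside [0,1]^2 are irrelevant).\<close>
definition is_copula :: "(real \<Rightarrow> real \<Rightarrow> real) \<Rightarrow> bool" where
  "is_copula C \<longleftrightarrow>
     (\<forall>u\<in>{0..1}. C u 0 = 0 \<and> C 0 u = 0 \<and> C u 1 = u \<and> C 1 u = u) \<and>
     (\<forall>u1 u2 v1 v2. 0 \<le> u1 \<and> u1 \<le> u2 \<and> u2 \<le> 1 \<and> 0 \<le> v1 \<and> v1 \<le> v2 \<and> v2 \<le> 1 \<longrightarrow>
        C u2 v2 - C u2 v1 - C u1 v2 + C u1 v1 \<ge> 0)"

text \<open>Partial derivative in the first argument (exists almost everywhere;
  set to 0 where it does not exist).\<close>
definition partial1 :: "(real \<Rightarrow> real \<Rightarrow> real) \<Rightarrow> real \<Rightarrow> real \<Rightarrow> real" where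
  "partial1 C u v = (if (\<lambda>x. C x v) differentiable (at u) then deriv (\<lambda>x. C x v) u else 0)"

definition xi :: "(real \<Rightarrow> real \<Rightarrow> real) \<Rightarrow> real" where
  "xi C = 6 * (LBINT v:{0..1}. LBINT u:{0..1}. (partial1 C u v)^2) - 2"

definition psi :: "(real \<Rightarrow> real \<Rightarrow> real) \<Rightarrow> real" where
  "psi C = 6 * (LBINT u:{0..1}. C u u) - 2"

definition csharp_density :: "real \<Rightarrow> real \<Rightarrow> real" where
  "csharp_density u v = 2 * (indicator {0..<1/2} u * indicator {1/2..1} v
                            + indicator {1/2..1} u * indicator {0..<1/2} v)"

definition Csharp :: "real \<Rightarrow> real \<Rightarrow> real" where
  "Csharp u v = (LBINT s:{0..u}. LBINT t:{0..v}. csharp_density s t)"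

end

theory Submission
  imports Defs
begin


definition dq :: "(real \<Rightarrow> real) \<Rightarrow> real \<Rightarrow> real \<Rightarrow> real" where
  "dq F x h = (F (x + h) - F x) / h"

definition lipmono :: "(real \<Rightarrow> real) \<Rightarrow> bool" where
  "lipmono F \<longleftrightarrow> mono F \<and> (\<forall>x y. \<bar>F x - F y\<bar> \<le> \<bar>x - y\<bar>)"

definition Eset :: "(real \<Rightarrow> real) \<Rightarrow> real \<Rightarrow> real \<Rightarrow> real set" where
  "Eset F p q = {x. (\<forall>n::nat. \<exists>h::rat. h \<noteq> 0 \<and> \<bar>real_of_rat h\<bar> < 1 / Suc n \<and> dq F x (real_of_rat h) < p) \<and>
                    (\<forall>n::nat. \<exists>h::rat. h \<noteq> 0 \<and> \<bar>real_of_rat h\<bar> < 1 / Suc n \<and> dq F x (real_of_rat h) > q)}"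

lemma lipmono_cont: "lipmono F \<Longrightarrow> continuous_on UNIV F"
  unfolding lipmono_def continuous_on_iff dist_real_def
  by (metis le_less_trans)

lemma lipmono_dq: assumes "lipmono F" "h \<noteq> 0" shows "0 \<le> dq F x h" "dq F x h \<le> 1"
proof -
  have m: "mono F" using assms unfolding lipmono_def by auto
  have "\<bar>F (x+h) - F x\<bar> \<le> \<bar>(x+h) - x\<bar>" using assms unfolding lipmono_def by blast
  then have l: "\<bar>F (x+h) - F x\<bar> \<le> \<bar>h\<bar>" by simp
  show "0 \<le> dq F x h"
  proof (cases "h > 0")
    case True
    then have "F x \<le> F (x+h)" using m by (auto simp: mono_def)
    then show ?thesis using True by (simp add: dq_def)
  next
    case False
    then have "h < 0" using assms by auto
    then have "F (x+h) \<le> F x" using m by (auto simp: mono_def)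
    then show ?thesis using \<open>h<0\<close> by (simp add: dq_def divide_nonpos_neg)
  qed
  have "\<bar>dq F x h\<bar> \<le> 1" unfolding dq_def abs_divide using l assms(2) by (simp add: divide_le_eq_1)
  then show "dq F x h \<le> 1" by simp
qed

lemma Eset_borel:
  assumes "continuous_on UNIV F"
  shows "Eset F p q \<in> sets borel"
proof -
  have [measurable]: "F \<in> borel_measurable borel" using assms by (rule borel_measurable_continuous_onI)
  have [measurable]: "(\<lambda>x. dq F x h) \<in> borel_measurable borel" for h
    unfolding dq_def by measurable
  have "Eset F p q = {x \<in> space borel. (\<forall>n::nat. \<exists>h::rat. h \<noteq> 0 \<and> \<bar>real_of_rat h\<bar> < 1 / Suc n \<and> dq F x (real_of_rat h) < p) \<and>
                    (\<forall>n::nat. \<exists>h::rat. h \<noteq> 0 \<and> \<bar>real_of_rat h\<bar> < 1 / Suc n \<and> dq F x (real_of_rat h) > q)}"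
    by (auto simp: Eset_def)
  also have "\<dots> \<in> sets borel" by measurable
  finally show ?thesis .
qed

lemma dq_isCont:
  assumes "continuous_on UNIV F" "h \<noteq> 0"
  shows "isCont (dq F x) h"
proof -
  have "isCont F (x + h)" using assms(1) by (simp add: continuous_on_eq_continuous_at)
  have "isCont (\<lambda>h. x + h) h" by simp
  then have "isCont (F \<circ> (\<lambda>h. x + h)) h" using \<open>isCont F (x + h)\<close> by (rule continuous_at_compose)
  then have A: "isCont (\<lambda>h. F (x + h)) h" by (simp add: o_def)
  have "isCont (\<lambda>h. (F (x + h) - F x) / h) h"
    by (intro continuous_intros A) (use assms(2) in simp)
  then show ?thesis unfolding dq_def .
qed

lemma rat_approx:
  assumes "continuous_on UNIV F" "h \<noteq> 0" "\<bar>h\<bar> < r" "open T" "dq F x h \<in> T"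
  shows "\<exists>h'::rat. h' \<noteq> 0 \<and> \<bar>real_of_rat h'\<bar> < r \<and> dq F x (real_of_rat h') \<in> T"
proof -
  have "eventually (\<lambda>y. dq F x y \<in> T) (at h)"
    using dq_isCont[OF assms(1,2), of x] assms(4,5) unfolding isCont_def
    by (rule topological_tendstoD)
  then obtain d where d: "d > 0" "\<And>y. y \<noteq> h \<Longrightarrow> dist y h < d \<Longrightarrow> dq F x y \<in> T"
    unfolding eventually_at by auto
  define e where "e = min d (min (\<bar>h\<bar>/2) (r - \<bar>h\<bar>))"
  have e: "e > 0" using d assms(2,3) by (auto simp: e_def)
  obtain y where y: "y \<in> \<rat>" "h < y" "y < h + e" using Rats_dense_in_real[of h "h+e"] e by auto
  obtain h' where h': "y = real_of_rat h'" using y(1) Rats_cases by blast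
  have "y \<noteq> 0" "\<bar>y\<bar> < r" "dq F x y \<in> T"
    using y e d(2)[of y] by (auto simp: e_def dist_real_def)
  then show ?thesis using h' by auto
qed

lemma diff_notin_Eset:
  assumes "F differentiable (at x)" "p < q"
  shows "x \<notin> Eset F p q"
proof
  assume x: "x \<in> Eset F p q"
  have D: "((\<lambda>h. dq F x h) \<longlongrightarrow> deriv F x) (at 0)"
    using assms(1) unfolding DERIV_deriv_iff_real_differentiable[symmetric] DERIV_def dq_def .
  have "\<forall>n. \<exists>h::rat. h \<noteq> 0 \<and> \<bar>real_of_rat h\<bar> < 1 / Suc n \<and> dq F x (real_of_rat h) < p"
    using x unfolding Eset_def by auto
  then obtain hs where hs: "\<And>n. hs n \<noteq> 0 \<and> \<bar>real_of_rat (hs n)\<bar> < 1 / Suc n \<and> dq F x (real_of_rat (hs n)) < p"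
    by metis
  have "\<forall>n. \<exists>h::rat. h \<noteq> 0 \<and> \<bar>real_of_rat h\<bar> < 1 / Suc n \<and> dq F x (real_of_rat h) > q"
    using x unfolding Eset_def by auto
  then obtain ks where ks: "\<And>n. ks n \<noteq> 0 \<and> \<bar>real_of_rat (ks n)\<bar> < 1 / Suc n \<and> dq F x (real_of_rat (ks n)) > q"
    by metis
  have l1: "filterlim (\<lambda>n. real_of_rat (hs n)) (at 0) sequentially"
    unfolding filterlim_at using hs by (auto intro!: LIMSEQ_norm_0)
  have l2: "filterlim (\<lambda>n. real_of_rat (ks n)) (at 0) sequentially"
    unfolding filterlim_at using ks by (auto intro!: LIMSEQ_norm_0)
  have t1: "(\<lambda>n. dq F x (real_of_rat (hs n))) \<longlonglongrightarrow> deriv F x"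
    using filterlim_compose[OF D l1] .
  have t2: "(\<lambda>n. dq F x (real_of_rat (ks n))) \<longlonglongrightarrow> deriv F x"
    using filterlim_compose[OF D l2] .
  have "deriv F x \<le> p"
    using t1 by (rule LIMSEQ_le_const2) (use hs less_imp_le in blast)
  moreover have "deriv F x \<ge> q"
    using t2 by (rule LIMSEQ_le_const) (use ks less_imp_le in blast)
  ultimately show False using assms(2) by simp
qed

lemma notin_diff:
  assumes F: "lipmono F" and nE: "\<And>p q::rat. p < q \<Longrightarrow> x \<notin> Eset F (real_of_rat p) (real_of_rat q)"
  shows "F differentiable (at x)"
proof -
  have cF: "continuous_on UNIV F" using F by (rule lipmono_cont)
  define g where "g h = ereal (dq F x h)" for h
  define Li where "Li = Liminf (at (0::real)) g"
  define Ls where "Ls = Limsup (at (0::real)) g"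
  have ev: "eventually (\<lambda>h. 0 \<le> g h \<and> g h \<le> 1) (at (0::real))"
    unfolding eventually_at g_def using lipmono_dq[OF F] by (auto intro!: exI[of _ 1])
  have Li0: "0 \<le> Li" unfolding Li_def by (rule Liminf_bounded) (use ev in \<open>auto elim: eventually_mono\<close>)
  have Ls1: "Ls \<le> 1" unfolding Ls_def by (rule Limsup_bounded) (use ev in \<open>auto elim: eventually_mono\<close>)
  have LL: "Li \<le> Ls" unfolding Li_def Ls_def by (rule Liminf_le_Limsup) simp
  define l where "l = real_of_ereal Li"
  define s where "s = real_of_ereal Ls"
  have Lil: "Li = ereal l" using Li0 LL Ls1 unfolding l_def by (cases Li) auto
  have Lss: "Ls = ereal s" using Li0 LL Ls1 unfolding s_def by (cases Ls) auto
  show ?thesis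
  proof (cases "l < s")
    case True
    obtain p' where p': "p' \<in> \<rat>" "l < p'" "p' < s" using Rats_dense_in_real[OF True] by auto
    obtain q' where q': "q' \<in> \<rat>" "p' < q'" "q' < s" using Rats_dense_in_real[OF p'(3)] by auto
    obtain p where p: "p' = real_of_rat p" using p'(1) Rats_cases by blast
    obtain q where q: "q' = real_of_rat q" using q'(1) Rats_cases by blast
    have pq: "p < q" using p q p'(2) q'(2) by (simp add: of_rat_less)
    have "\<not> ereal p' \<le> Li" using Lil p' by simp
    then obtain y where y: "y < ereal p'" "\<not> eventually (\<lambda>h. y < g h) (at 0)"
      unfolding Li_def le_Liminf_iff by auto
    have A: "\<exists>h::rat. h \<noteq> 0 \<and> \<bar>real_of_rat h\<bar> < 1 / Suc n \<and> dq F x (real_of_rat h) < p'" for n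
    proof -
      have "\<not> (\<forall>h. h \<noteq> 0 \<and> dist h 0 < 1 / Suc n \<longrightarrow> y < g h)"
      proof
        assume H: "\<forall>h. h \<noteq> 0 \<and> dist h 0 < 1 / Suc n \<longrightarrow> y < g h"
        have "eventually (\<lambda>h. y < g h) (at 0)" unfolding eventually_at using H
          by (intro exI[of _ "1 / Suc n"]) auto
        with y(2) show False by simp
      qed
      then obtain h where h: "h \<noteq> 0" "\<bar>h\<bar> < 1 / Suc n" "\<not> y < g h" by auto
      have "ereal (dq F x h) < ereal p'" using h(3) y(1) unfolding g_def by (meson not_less order_le_less_trans)
      then have "dq F x h < p'" by simp
      then show ?thesis using rat_approx[OF cF h(1,2), of "{..<p'}" x] by auto
    qed
    have "\<not> Ls \<le> ereal q'" using Lss q' by simp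
    then obtain y where y: "y > ereal q'" "\<not> eventually (\<lambda>h. g h < y) (at 0)"
      unfolding Ls_def Limsup_le_iff by auto
    have B: "\<exists>h::rat. h \<noteq> 0 \<and> \<bar>real_of_rat h\<bar> < 1 / Suc n \<and> dq F x (real_of_rat h) > q'" for n
    proof -
      have "\<not> (\<forall>h. h \<noteq> 0 \<and> dist h 0 < 1 / Suc n \<longrightarrow> g h < y)"
      proof
        assume H: "\<forall>h. h \<noteq> 0 \<and> dist h 0 < 1 / Suc n \<longrightarrow> g h < y"
        have "eventually (\<lambda>h. g h < y) (at 0)" unfolding eventually_at using H
          by (intro exI[of _ "1 / Suc n"]) auto
        with y(2) show False by simp
      qed
      then obtain h where h: "h \<noteq> 0" "\<bar>h\<bar> < 1 / Suc n" "\<not> g h < y" by auto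
      have "ereal (dq F x h) > ereal q'" using h(3) y(1) unfolding g_def by (meson not_less order_less_le_trans)
      then have "dq F x h > q'" by simp
      then show ?thesis using rat_approx[OF cF h(1,2), of "{q'<..}" x] by auto
    qed
    have "x \<in> Eset F p' q'" unfolding Eset_def using A B by auto
    then show ?thesis using nE[OF pq] p q by simp
  next
    case False
    then have "Li = Ls" using LL Lil Lss by simp
    then have "(g \<longlongrightarrow> Li) (at 0)" unfolding Li_def Ls_def
      by (intro Liminf_eq_Limsup) auto
    then have "((\<lambda>h. dq F x h) \<longlongrightarrow> l) (at 0)" unfolding Lil g_def lim_ereal .
    then have "(F has_field_derivative l) (at x)" unfolding DERIV_def dq_def .
    then show ?thesis by (auto simp: differentiable_def has_field_derivative_def)
  qed
qed


lemma cover_step: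
  assumes "open W" "x \<in> W" "d > 0"
    and H: "\<forall>n::nat. \<exists>h::rat. h \<noteq> 0 \<and> \<bar>real_of_rat h\<bar> < 1 / Suc n \<and> P (dq F x (real_of_rat h))"
  shows "\<exists>c \<rho> t. 0 < \<rho> \<and> cball c \<rho> \<subseteq> W \<and> x \<in> cball c \<rho> \<and> \<rho> < d \<and> P t \<and> F (c + \<rho>) - F (c - \<rho>) = 2 * \<rho> * t"
proof -
  obtain \<delta> where \<delta>: "\<delta> > 0" "ball x \<delta> \<subseteq> W" using assms(1,2) open_contains_ball by blast
  obtain n where n: "inverse (real (Suc n)) < min \<delta> d" using reals_Archimedean[of "min \<delta> d"] \<delta> assms(3) by auto
  obtain h where h: "h \<noteq> 0" "\<bar>real_of_rat h\<bar> < 1 / Suc n" "P (dq F x (real_of_rat h))" using H by blast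
  define hh where "hh = real_of_rat h"
  have hh0: "hh \<noteq> 0" using h(1) by (simp add: hh_def)
  have hhb: "\<bar>hh\<bar> < min \<delta> d" using h(2) n by (simp add: hh_def inverse_eq_divide)
  define c where "c = x + hh / 2"
  define \<rho> where "\<rho> = \<bar>hh\<bar> / 2"
  have "cball c \<rho> \<subseteq> W"
  proof
    fix y assume "y \<in> cball c \<rho>"
    then have "\<bar>y - c\<bar> \<le> \<rho>" by (simp add: dist_real_def abs_minus_commute)
    then have "\<bar>y - x\<bar> < \<delta>" using hhb unfolding c_def \<rho>_def by linarith
    then show "y \<in> W" using \<delta>(2) by (auto simp: dist_real_def abs_minus_commute)
  qed
  moreover have "x \<in> cball c \<rho>" by (simp add: c_def \<rho>_def dist_real_def)
  moreover have "F (c + \<rho>) - F (c - \<rho>) = 2 * \<rho> * dq F x hh"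
  proof (cases "hh > 0")
    case True
    then have e1: "c + \<rho> = x + hh" and e2: "c - \<rho> = x" by (auto simp: c_def \<rho>_def)
    show ?thesis unfolding e1 e2 unfolding dq_def \<rho>_def using True by simp
  next
    case False
    then have "hh < 0" using hh0 by auto
    then have e1: "c + \<rho> = x" and e2: "c - \<rho> = x + hh" by (auto simp: c_def \<rho>_def)
    show ?thesis unfolding e1 e2 unfolding dq_def \<rho>_def using \<open>hh < 0\<close> by (simp add: field_simps)
  qed
  moreover have "0 < \<rho>" "\<rho> < d" using hh0 hhb by (auto simp: \<rho>_def)
  ultimately show ?thesis using h(3) unfolding hh_def[symmetric] by blast
qed

lemma negligible_borel_null: "negligible S \<Longrightarrow> S \<in> sets borel \<Longrightarrow> S \<in> null_sets lborel"
  using negligible_iff_null_sets null_sets_completion_iff by (metis sets_lborel)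

lemma emeasure_interval_measure_cball:
  assumes "lipmono F" "0 \<le> \<rho>"
  shows "emeasure (interval_measure F) (cball c \<rho>) = ennreal (F (c + \<rho>) - F (c - \<rho>))"
  unfolding cball_eq_atLeastAtMost
  by (rule emeasure_interval_measure_Icc) (use assms lipmono_cont in \<open>auto simp: lipmono_def mono_def\<close>)

lemma emeasure_lborel_cball_real:
  assumes "0 \<le> \<rho>"
  shows "emeasure lborel (cball (c::real) \<rho>) = ennreal (2 * \<rho>)"
  unfolding cball_eq_atLeastAtMost using assms by simp


lemma vitali_step:
  assumes W: "open W" "S \<subseteq> W"
    and H: "\<And>x. x \<in> S \<Longrightarrow> \<forall>n::nat. \<exists>h::rat. h \<noteq> 0 \<and> \<bar>real_of_rat h\<bar> < 1 / Suc n \<and> P (dq F x (real_of_rat h))"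
  obtains C where "countable C"
    "\<And>i. i \<in> C \<Longrightarrow> 0 < snd i \<and> cball (fst i) (snd i) \<subseteq> W \<and> (\<exists>t. P t \<and> F (fst i + snd i) - F (fst i - snd i) = 2 * snd i * t)"
    "pairwise (\<lambda>i j. disjnt (cball (fst i) (snd i)) (cball (fst j) (snd j))) C"
    "negligible (S - (\<Union>i\<in>C. cball (fst i) (snd i)))"
proof -
  define K where "K = {i. 0 < snd i \<and> cball (fst i) (snd i) \<subseteq> W \<and> (\<exists>t. P t \<and> F (fst i + snd i) - F (fst i - snd i) = 2 * snd i * t)}"
  have r: "\<And>i. i \<in> K \<Longrightarrow> 0 < snd i" by (auto simp: K_def)
  have cov: "\<exists>i. i \<in> K \<and> x \<in> cball (fst i) (snd i) \<and> snd i < d" if xS: "x \<in> S" and d0: "0 < d" for x d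
  proof -
    obtain c \<rho> t where "0 < \<rho>" "cball c \<rho> \<subseteq> W" "x \<in> cball c \<rho>" "\<rho> < d" "P t" "F (c + \<rho>) - F (c - \<rho>) = 2 * \<rho> * t"
      using cover_step[OF W(1) _ d0 H[OF xS]] xS W(2) by blast
    then show ?thesis by (intro exI[of _ "(c, \<rho>)"]) (auto simp: K_def)
  qed
  obtain C where "countable C" "C \<subseteq> K"
     "pairwise (\<lambda>i j. disjnt (cball (fst i) (snd i)) (cball (fst j) (snd j))) C"
     "negligible(S - (\<Union>i \<in> C. cball (fst i) (snd i)))"
    using Vitali_covering_theorem_cballs[of K snd S fst, OF r cov] by blast
  note C = this
  show thesis
  proof (rule that[OF C(1) _ C(3,4)])
    fix i assume "i \<in> C"
    then show "0 < snd i \<and> cball (fst i) (snd i) \<subseteq> W \<and> (\<exists>t. P t \<and> F (fst i + snd i) - F (fst i - snd i) = 2 * snd i * t)"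
      using C(2) unfolding K_def by blast
  qed
qed

lemma UN_cball_measure:
  assumes "countable C" "pairwise (\<lambda>i j. disjnt (cball (fst i) (snd i)) (cball (fst j) (snd j))) C"
    "sets M = sets borel"
  shows "emeasure M (\<Union>i\<in>C. cball (fst i) (snd i)) = (\<integral>\<^sup>+i. emeasure M (cball (fst i) (snd i)) \<partial>count_space C)"
proof (rule emeasure_UN_countable)
  show "\<And>i. i \<in> C \<Longrightarrow> cball (fst i) (snd i) \<in> sets M" using assms(3) by simp
  show "countable C" by fact
  show "disjoint_family_on (\<lambda>i. cball (fst i) (snd i)) C"
    using assms(2) unfolding disjoint_family_on_def pairwise_def disjnt_def by blast
qed

lemma Eset_empty: assumes "lipmono F" "p \<le> 0" shows "Eset F p q = {}"
proof (rule ccontr)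
  assume "Eset F p q \<noteq> {}"
  then obtain x where "x \<in> Eset F p q" by auto
  then obtain h::rat where h: "h \<noteq> 0" "dq F x (real_of_rat h) < p" unfolding Eset_def by blast
  have "0 \<le> dq F x (real_of_rat h)" using lipmono_dq(1)[OF assms(1)] h(1) by simp
  then show False using h(2) assms(2) by simp
qed


lemma Eset_null:
  assumes F: "lipmono F" and pq: "p < q"
  shows "Eset F p q \<inter> {a<..<b} \<in> null_sets lborel"
proof (cases "p \<le> 0")
  case True then show ?thesis by (simp add: Eset_empty[OF F True])
next
  case False
  then have p0: "0 < p" by simp
  then have q0: "0 < q" using pq by simp
  define E where "E = Eset F p q \<inter> {a<..<b}"
  define \<mu> where "\<mu> = interval_measure F"
  have smu: "sets \<mu> = sets borel" by (simp add: \<mu>_def)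
  have Eb: "E \<in> sets borel" using Eset_borel[OF lipmono_cont[OF F]] by (simp add: E_def)
  have "emeasure lborel E \<le> emeasure lborel {a..b}"
    by (rule emeasure_mono) (auto simp: E_def)
  also have "\<dots> < top" by (simp add: emeasure_lborel_Icc_eq)
  finally have Efin: "emeasure lborel E < top" .
  obtain mr where mr: "emeasure lborel E = ennreal mr" "0 \<le> mr"
    using Efin by (cases "emeasure lborel E" rule: ennreal_cases) auto
  have HE: "\<And>x. x \<in> E \<Longrightarrow> \<forall>n::nat. \<exists>h::rat. h \<noteq> 0 \<and> \<bar>real_of_rat h\<bar> < 1 / Suc n \<and> dq F x (real_of_rat h) < p"
    by (auto simp: E_def Eset_def)
  have HE2: "\<And>x. x \<in> E \<Longrightarrow> \<forall>n::nat. \<exists>h::rat. h \<noteq> 0 \<and> \<bar>real_of_rat h\<bar> < 1 / Suc n \<and> q < dq F x (real_of_rat h)"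
    by (auto simp: E_def Eset_def)
  have key: "q * mr \<le> p * (mr + \<epsilon>)" if e0: "\<epsilon> > 0" for \<epsilon>
  proof -
    obtain U where U: "open U" "E \<subseteq> U" "emeasure lborel (U - E) < \<epsilon>"
      using outer_regular_lborel[OF Eb e0] by blast
    define W where "W = U \<inter> {a<..<b}"
    have W: "open W" "E \<subseteq> W" using U by (auto simp: W_def E_def)
    have "emeasure lborel W \<le> emeasure lborel (E \<union> (U - E))"
      by (rule emeasure_mono) (use U Eb in \<open>auto simp: W_def\<close>)
    also have "\<dots> \<le> emeasure lborel E + emeasure lborel (U - E)"
      by (rule emeasure_subadditive) (use U Eb in auto)
    also have "\<dots> \<le> ennreal mr + ennreal \<epsilon>"
      using U(3) mr by (intro add_mono) auto
    also have "\<dots> = ennreal (mr + \<epsilon>)" using mr e0 by (simp add: ennreal_plus)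
    finally have Wm: "emeasure lborel W \<le> ennreal (mr + \<epsilon>)" .
    obtain C1 where C1: "countable C1"
      "\<And>i. i \<in> C1 \<Longrightarrow> 0 < snd i \<and> cball (fst i) (snd i) \<subseteq> W \<and> (\<exists>t. t < p \<and> F (fst i + snd i) - F (fst i - snd i) = 2 * snd i * t)"
      "pairwise (\<lambda>i j. disjnt (cball (fst i) (snd i)) (cball (fst j) (snd j))) C1"
      "negligible (E - (\<Union>i\<in>C1. cball (fst i) (snd i)))"
      using vitali_step[OF W, of "\<lambda>t. t < p" F] HE by blast
    define U1 where "U1 = (\<Union>i\<in>C1. cball (fst i) (snd i))"
    define V1 where "V1 = (\<Union>i\<in>C1. ball (fst i) (snd i))"
    have U1b: "U1 \<in> sets borel" unfolding U1_def using C1(1) by (intro sets.countable_UN'') auto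
    have U1W: "U1 \<subseteq> W" using C1(2) by (auto simp: U1_def)
    have "emeasure \<mu> U1 = (\<integral>\<^sup>+i. emeasure \<mu> (cball (fst i) (snd i)) \<partial>count_space C1)"
      unfolding U1_def by (rule UN_cball_measure[OF C1(1,3) smu])
    also have "\<dots> \<le> (\<integral>\<^sup>+i. ennreal p * emeasure lborel (cball (fst i) (snd i)) \<partial>count_space C1)"
    proof (rule nn_integral_mono)
      fix i assume "i \<in> space (count_space C1)"
      then have i: "i \<in> C1" by simp
      obtain t where t: "t < p" "F (fst i + snd i) - F (fst i - snd i) = 2 * snd i * t" using C1(2)[OF i] by blast
      have r0: "0 < snd i" using C1(2)[OF i] by blast
      have "emeasure \<mu> (cball (fst i) (snd i)) = ennreal (2 * snd i * t)"
        unfolding \<mu>_def using emeasure_interval_measure_cball[OF F, of "snd i" "fst i"] r0 t(2) by simp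
      also have "\<dots> \<le> ennreal (p * (2 * snd i))"
        using t(1) r0 by (intro ennreal_leI) simp
      also have "\<dots> = ennreal p * emeasure lborel (cball (fst i) (snd i))"
        using r0 p0 by (simp add: emeasure_lborel_cball_real ennreal_mult)
      finally show "emeasure \<mu> (cball (fst i) (snd i)) \<le> ennreal p * emeasure lborel (cball (fst i) (snd i))" .
    qed
    also have "\<dots> = ennreal p * (\<integral>\<^sup>+i. emeasure lborel (cball (fst i) (snd i)) \<partial>count_space C1)"
      by (rule nn_integral_cmult) simp
    also have "\<dots> = ennreal p * emeasure lborel U1"
      unfolding U1_def by (subst UN_cball_measure[OF C1(1,3)]) simp_all
    also have "\<dots> \<le> ennreal p * ennreal (mr + \<epsilon>)"
      by (intro mult_left_mono order.trans[OF emeasure_mono[OF U1W] Wm]) (auto intro: borel_open W(1))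
    finally have muU1: "emeasure \<mu> U1 \<le> ennreal p * ennreal (mr + \<epsilon>)" .
    have V1o: "open V1" unfolding V1_def by auto
    have V1U1: "V1 \<subseteq> U1" unfolding V1_def U1_def by auto
    define A where "A = E \<inter> V1"
    have Ab: "A \<in> sets borel" unfolding A_def using Eb V1o by auto
    have "negligible (\<Union>i\<in>C1. sphere (fst i) (snd i))"
      using C1(1) by (intro negligible_countable_Union) (auto intro: negligible_sphere)
    then have "negligible ((E - U1) \<union> (\<Union>i\<in>C1. sphere (fst i) (snd i)))"
      using C1(4) unfolding U1_def by (rule negligible_Un[rotated])
    then have "negligible (E - A)"
      by (rule negligible_subset) (force simp: A_def U1_def V1_def less_le)
    then have EAnull: "E - A \<in> null_sets lborel"
      by (rule negligible_borel_null) (use Eb Ab in auto)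
    have "emeasure lborel E = emeasure lborel (E - (E - A))"
      using emeasure_Diff_null_set[OF EAnull, of E] Eb by simp
    also have "E - (E - A) = A" by (auto simp: A_def)
    finally have EA: "emeasure lborel E = emeasure lborel A" .
    obtain C2 where C2: "countable C2"
      "\<And>i. i \<in> C2 \<Longrightarrow> 0 < snd i \<and> cball (fst i) (snd i) \<subseteq> V1 \<and> (\<exists>t. q < t \<and> F (fst i + snd i) - F (fst i - snd i) = 2 * snd i * t)"
      "pairwise (\<lambda>i j. disjnt (cball (fst i) (snd i)) (cball (fst j) (snd j))) C2"
      "negligible (A - (\<Union>i\<in>C2. cball (fst i) (snd i)))"
      using vitali_step[OF V1o _ HE2, of A] by (auto simp: A_def)
    define U2 where "U2 = (\<Union>i\<in>C2. cball (fst i) (snd i))"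
    have U2b: "U2 \<in> sets borel" unfolding U2_def using C2(1) by (intro sets.countable_UN'') auto
    have U2U1: "U2 \<subseteq> U1" using C2(2) V1U1 by (auto simp: U2_def)
    have AU2null: "A - U2 \<in> null_sets lborel"
      by (rule negligible_borel_null) (use C2(4) Ab U2b in \<open>auto simp: U2_def\<close>)
    have "emeasure lborel A = emeasure lborel (A - (A - U2))"
      using emeasure_Diff_null_set[OF AU2null, of A] Ab by simp
    also have "\<dots> \<le> emeasure lborel U2" by (rule emeasure_mono) (use U2b in auto)
    finally have AU2: "emeasure lborel A \<le> emeasure lborel U2" .
    have "ennreal q * emeasure lborel U2 = ennreal q * (\<integral>\<^sup>+i. emeasure lborel (cball (fst i) (snd i)) \<partial>count_space C2)"
      unfolding U2_def by (subst UN_cball_measure[OF C2(1,3)]) simp_all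
    also have "\<dots> = (\<integral>\<^sup>+i. ennreal q * emeasure lborel (cball (fst i) (snd i)) \<partial>count_space C2)"
      by (rule nn_integral_cmult[symmetric]) simp
    also have "\<dots> \<le> (\<integral>\<^sup>+i. emeasure \<mu> (cball (fst i) (snd i)) \<partial>count_space C2)"
    proof (rule nn_integral_mono)
      fix i assume "i \<in> space (count_space C2)"
      then have i: "i \<in> C2" by simp
      obtain t where t: "q < t" "F (fst i + snd i) - F (fst i - snd i) = 2 * snd i * t" using C2(2)[OF i] by blast
      have r0: "0 < snd i" using C2(2)[OF i] by blast
      have "ennreal q * emeasure lborel (cball (fst i) (snd i)) = ennreal (q * (2 * snd i))"
        using r0 q0 by (simp add: emeasure_lborel_cball_real ennreal_mult)
      also have "\<dots> \<le> ennreal (2 * snd i * t)"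
        using t(1) r0 by (intro ennreal_leI) simp
      also have "\<dots> = emeasure \<mu> (cball (fst i) (snd i))"
        unfolding \<mu>_def using emeasure_interval_measure_cball[OF F, of "snd i" "fst i"] r0 t(2) by simp
      finally show "ennreal q * emeasure lborel (cball (fst i) (snd i)) \<le> emeasure \<mu> (cball (fst i) (snd i))" .
    qed
    also have "\<dots> = emeasure \<mu> U2"
      unfolding U2_def by (rule UN_cball_measure[OF C2(1,3) smu, symmetric])
    also have "\<dots> \<le> emeasure \<mu> U1" by (rule emeasure_mono[OF U2U1]) (use U1b smu in simp)
    finally have "ennreal q * emeasure lborel U2 \<le> ennreal p * ennreal (mr + \<epsilon>)" using muU1 by simp
    moreover have "ennreal q * ennreal mr \<le> ennreal q * emeasure lborel U2"
      using EA AU2 mr(1) by (intro mult_left_mono) auto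
    ultimately have "ennreal (q * mr) \<le> ennreal (p * (mr + \<epsilon>))"
      using q0 p0 mr(2) e0 by (simp add: ennreal_mult)
    then show ?thesis using p0 mr(2) e0 by (subst (asm) ennreal_le_iff) auto
  qed
  have "mr = 0"
  proof (rule ccontr)
    assume "mr \<noteq> 0"
    then have m0: "mr > 0" using mr(2) by simp
    define \<epsilon> where "\<epsilon> = (q - p) * mr / (2 * p)"
    have e0: "\<epsilon> > 0" using m0 p0 pq by (simp add: \<epsilon>_def)
    have k: "q * mr \<le> p * (mr + \<epsilon>)" by (rule key[OF e0])
    have "p * (mr + \<epsilon>) = p * mr + (q - p) * mr / 2" using p0 by (simp add: \<epsilon>_def field_simps)
    then have "q * mr \<le> p * mr + (q - p) * mr / 2" using k by linarith
    then have "(q - p) * mr \<le> 0" by (simp add: field_simps)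
    then show False using m0 pq by (simp add: mult_le_0_iff)
  qed
  then show ?thesis using mr(1) Eb unfolding E_def[symmetric] by (intro null_setsI) auto
qed


definition pd :: "(real \<Rightarrow> real) \<Rightarrow> real \<Rightarrow> real" where
  "pd F u = (if F differentiable (at u) then deriv F u else 0)"

lemma nondiff_subset:
  assumes "lipmono F"
  shows "{x. \<not> F differentiable (at x)} = (\<Union>pq\<in>{pq::rat\<times>rat. fst pq < snd pq}. Eset F (real_of_rat (fst pq)) (real_of_rat (snd pq)))"
proof -
  have "x \<in> (\<Union>pq\<in>{pq::rat\<times>rat. fst pq < snd pq}. Eset F (real_of_rat (fst pq)) (real_of_rat (snd pq)))"
    if nd: "\<not> F differentiable (at x)" for x
  proof -
    obtain p q :: rat where "p < q" "x \<in> Eset F (real_of_rat p) (real_of_rat q)"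
      using notin_diff[OF assms, of x] nd by blast
    then show ?thesis by (intro UN_I[of "(p,q)"]) auto
  qed
  moreover have "\<not> F differentiable (at x)"
    if xin: "x \<in> (\<Union>pq\<in>{pq::rat\<times>rat. fst pq < snd pq}. Eset F (real_of_rat (fst pq)) (real_of_rat (snd pq)))" for x
  proof -
    obtain p q :: rat where "p < q" "x \<in> Eset F (real_of_rat p) (real_of_rat q)" using xin by auto
    then show ?thesis using diff_notin_Eset[of F x "real_of_rat p" "real_of_rat q"] by (auto simp: of_rat_less)
  qed
  ultimately show ?thesis by blast
qed

lemma Dset_borel:
  assumes "lipmono F"
  shows "{x. F differentiable (at x)} \<in> sets borel"
proof -
  have "{x. \<not> F differentiable (at x)} \<in> sets borel"
    unfolding nondiff_subset[OF assms]
    by (intro sets.countable_UN'' Eset_borel lipmono_cont[OF assms]) auto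
  then have "- {x. \<not> F differentiable (at x)} \<in> sets borel" by (rule borel_comp)
  then show ?thesis by (simp add: Compl_eq)
qed

lemma lip_AE_diff:
  assumes "lipmono F"
  shows "AE x in lborel. F differentiable (at x)"
proof (rule AE_I')
  define N where "N = (\<Union>i\<in>(UNIV::(rat\<times>rat\<times>nat) set). if fst i < fst (snd i) then
     Eset F (real_of_rat (fst i)) (real_of_rat (fst (snd i))) \<inter> {- real (snd (snd i))<..<real (snd (snd i))} else {})"
  show "N \<in> null_sets lborel"
    unfolding N_def
    by (intro null_sets_UN') (auto intro: Eset_null[OF assms] simp: of_rat_less)
  show "{x \<in> space lborel. \<not> F differentiable (at x)} \<subseteq> N"
  proof
    fix x assume "x \<in> {x \<in> space lborel. \<not> F differentiable (at x)}"
    then have "x \<in> {x. \<not> F differentiable (at x)}" by simp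
    then obtain p q :: rat where pq: "p < q" "x \<in> Eset F (real_of_rat p) (real_of_rat q)"
      unfolding nondiff_subset[OF assms] by auto
    obtain n :: nat where n: "\<bar>x\<bar> < real n" using reals_Archimedean2[of "\<bar>x\<bar>"] by auto
    show "x \<in> N" unfolding N_def
      by (rule UN_I[of "(p, q, n)"]) (use pq n in auto)
  qed
qed

lemma dq_seq_tendsto:
  assumes "F differentiable (at u)"
  shows "(\<lambda>n. dq F u (1 / Suc n)) \<longlonglongrightarrow> deriv F u"
proof -
  have D: "((\<lambda>h. dq F u h) \<longlongrightarrow> deriv F u) (at 0)"
    using assms unfolding DERIV_deriv_iff_real_differentiable[symmetric] DERIV_def dq_def .
  have l: "filterlim (\<lambda>n. 1 / real (Suc n)) (at 0) sequentially"
    unfolding filterlim_at using LIMSEQ_inverse_real_of_nat by (simp add: inverse_eq_divide del: of_nat_Suc)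
  show ?thesis using filterlim_compose[OF D l] .
qed

lemma pd_borel:
  assumes "lipmono F"
  shows "pd F \<in> borel_measurable borel"
proof -
  have [measurable]: "F \<in> borel_measurable borel" using lipmono_cont[OF assms] by (rule borel_measurable_continuous_onI)
  have [measurable]: "{x. F differentiable (at x)} \<in> sets borel" using Dset_borel[OF assms] .
  have [measurable]: "(\<lambda>x. dq F x h) \<in> borel_measurable borel" for h
    unfolding dq_def by measurable
  have eq: "pd F = (\<lambda>x. if x \<in> {x. F differentiable (at x)} then lim (\<lambda>n. dq F x (1 / Suc n)) else 0)"
  proof
    fix x show "pd F x = (if x \<in> {x. F differentiable (at x)} then lim (\<lambda>n. dq F x (1 / Suc n)) else 0)"
      using dq_seq_tendsto[THEN limI, of F x] by (simp add: pd_def del: of_nat_Suc)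
  qed
  show ?thesis unfolding eq by measurable
qed

lemma pd_bounds:
  assumes "lipmono F"
  shows "0 \<le> pd F u" "pd F u \<le> 1"
proof -
  have "0 \<le> pd F u \<and> pd F u \<le> 1"
  proof (cases "F differentiable (at u)")
    case True
    have t: "(\<lambda>n. dq F u (1 / Suc n)) \<longlonglongrightarrow> deriv F u" by (rule dq_seq_tendsto[OF True])
    have "0 \<le> deriv F u" using t by (rule LIMSEQ_le_const) (use lipmono_dq(1)[OF assms] in auto)
    moreover have "deriv F u \<le> 1" using t by (rule LIMSEQ_le_const2) (use lipmono_dq(2)[OF assms] in auto)
    ultimately show ?thesis using True by (simp add: pd_def)
  qed (simp add: pd_def)
  then show "0 \<le> pd F u" "pd F u \<le> 1" by auto
qed


lemma antideriv:
  assumes "continuous_on UNIV F"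
  shows "((\<lambda>x. LBINT t=ereal 0..x. F t) has_real_derivative F x) (at x)"
proof -
  define a where "a = min 0 x - 1"
  define b where "b = max 0 x + 1"
  have "((\<lambda>x. LBINT t=ereal 0..x. F t) has_vector_derivative F x) (at x within {a..b})"
    apply (rule interval_integral_FTC2)
    apply (simp_all add: a_def b_def)
    using assms continuous_on_subset by blast
  moreover have "at x within {a..b} = at x" by (rule at_within_Icc_at) (auto simp: a_def b_def)
  ultimately show ?thesis by (simp add: has_real_derivative_iff_has_vector_derivative)
qed

lemma seq_at0: "filterlim (\<lambda>n. 1 / real (Suc n)) (at 0) sequentially"
  unfolding filterlim_at using LIMSEQ_inverse_real_of_nat by (simp add: inverse_eq_divide del: of_nat_Suc)

lemma dq_integral:
  assumes F: "lipmono F" and ab: "a \<le> b" and h: "h \<noteq> 0"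
  shows "(LBINT u:{a..b}. dq F u h) =
     ((LBINT t=ereal 0..b+h. F t) - (LBINT t=ereal 0..b. F t)) / h - ((LBINT t=ereal 0..a+h. F t) - (LBINT t=ereal 0..a. F t)) / h"
proof -
  have cF: "continuous_on UNIV F" by (rule lipmono_cont[OF F])
  define G :: "real \<Rightarrow> real" where "G x = (LBINT t=ereal 0..x. F t)" for x
  have dG: "(G has_real_derivative F y) (at y)" for y unfolding G_def by (rule antideriv[OF cF])
  have dG2: "((\<lambda>u. G (u + h)) has_real_derivative F (u + h)) (at u)" for u
    by (rule DERIV_shift[THEN iffD1, OF dG])
  have dH: "((\<lambda>u. (G (u + h) - G u) / h) has_vector_derivative dq F u h) (at u within X)" for u X
  proof -
    have "((\<lambda>u. G (u + h) - G u) has_real_derivative F (u + h) - F u) (at u)" by (rule DERIV_diff[OF dG2 dG])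
    then have "((\<lambda>u. (G (u + h) - G u) / h) has_real_derivative (F (u + h) - F u) / h) (at u)" by (rule DERIV_cdivide)
    then have "((\<lambda>u. (G (u + h) - G u) / h) has_real_derivative (F (u + h) - F u) / h) (at u within X)"
      by (rule has_field_derivative_at_within)
    then show ?thesis unfolding dq_def has_real_derivative_iff_has_vector_derivative .
  qed
  have cQ: "continuous_on X (\<lambda>u. dq F u h)" for X
  proof -
    have "continuous_on X (\<lambda>u. F (u + h))"
      by (rule continuous_on_compose2[OF cF continuous_on_add[OF continuous_on_id continuous_on_const]]) simp
    moreover have "continuous_on X F" by (rule continuous_on_subset[OF cF]) simp
    ultimately show ?thesis unfolding dq_def by (intro continuous_intros) (use h in auto)
  qed
  have "(LBINT u:{a..b}. dq F u h) = (LBINT u=a..b. dq F u h)" using ab by (simp add: interval_integral_Icc)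
  also have "\<dots> = (G (b + h) - G b) / h - (G (a + h) - G a) / h"
    by (rule interval_integral_FTC_finite[OF cQ dH])
  finally show ?thesis by (simp add: G_def diff_divide_distrib)
qed

lemma dq_integral_tendsto:
  assumes F: "lipmono F" and ab: "a \<le> b"
  shows "(\<lambda>n. LBINT u:{a..b}. dq F u (1 / Suc n)) \<longlonglongrightarrow> F b - F a"
proof -
  have cF: "continuous_on UNIV F" by (rule lipmono_cont[OF F])
  define G :: "real \<Rightarrow> real" where "G x = (LBINT t=ereal 0..x. F t)" for x
  have dG: "(G has_real_derivative F y) (at y)" for y unfolding G_def by (rule antideriv[OF cF])
  have lim: "(\<lambda>n. (G (y + 1 / Suc n) - G y) / (1 / Suc n)) \<longlonglongrightarrow> F y" for y
  proof -
    have "((\<lambda>h. (G (y + h) - G y) / h) \<longlongrightarrow> F y) (at 0)" using dG[of y] unfolding DERIV_def .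
    from filterlim_compose[OF this seq_at0] show ?thesis .
  qed
  have eq: "(LBINT u:{a..b}. dq F u (1 / Suc n)) = (G (b + 1 / Suc n) - G b) / (1 / Suc n) - (G (a + 1 / Suc n) - G a) / (1 / Suc n)" for n
    unfolding G_def by (rule dq_integral[OF F ab]) simp
  show ?thesis unfolding eq by (intro tendsto_intros lim)
qed

lemma pd_dc:
  fixes \<phi> :: "real \<Rightarrow> real"
  assumes F: "lipmono F" and ab: "a \<le> b" and \<phi>: "continuous_on UNIV \<phi>"
  shows "set_integrable lborel {a..b} (\<lambda>u. \<phi> (pd F u))"
    and "(\<lambda>n. LBINT u:{a..b}. \<phi> (dq F u (1 / Suc n))) \<longlonglongrightarrow> (LBINT u:{a..b}. \<phi> (pd F u))"
proof -
  have cF: "continuous_on UNIV F" by (rule lipmono_cont[OF F])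
  have [measurable]: "F \<in> borel_measurable borel" using cF by (rule borel_measurable_continuous_onI)
  have [measurable]: "\<phi> \<in> borel_measurable borel" using \<phi> by (rule borel_measurable_continuous_onI)
  have [measurable]: "pd F \<in> borel_measurable borel" by (rule pd_borel[OF F])
  have "compact (\<phi> ` {0..1})" by (intro compact_continuous_image continuous_on_subset[OF \<phi>]) auto
  then obtain K where "\<forall>y\<in>\<phi> ` {0..1}. norm y \<le> K" using compact_imp_bounded bounded_iff by blast
  then have K: "\<And>t. t \<in> {0..1} \<Longrightarrow> norm (\<phi> t) \<le> K" by auto
  define s where "s n u = indicator {a..b} u *\<^sub>R \<phi> (dq F u (1 / Suc n))" for n u
  define f where "f u = indicator {a..b} u *\<^sub>R \<phi> (pd F u)" for u
  define w where "w u = indicator {a..b} u *\<^sub>R K" for u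
  have fm: "f \<in> borel_measurable lborel" unfolding f_def by measurable
  have sm: "s n \<in> borel_measurable lborel" for n unfolding s_def dq_def by measurable
  have wi: "integrable lborel w" unfolding w_def by (rule borel_integrable_compact) auto
  have lim: "AE u in lborel. (\<lambda>n. s n u) \<longlonglongrightarrow> f u"
    using lip_AE_diff[OF F]
  proof eventually_elim
    case (elim u)
    have "(\<lambda>n. \<phi> (dq F u (1 / Suc n))) \<longlonglongrightarrow> \<phi> (pd F u)"
      using dq_seq_tendsto[OF elim] elim \<phi> unfolding pd_def
      by (auto intro: continuous_on_tendsto_compose[OF \<phi>])
    then show ?case unfolding s_def f_def by (intro tendsto_intros)
  qed
  have bound: "AE u in lborel. norm (s n u) \<le> w u" for n
  proof (rule AE_I2)
    fix u
    have "dq F u (1 / Suc n) \<in> {0..1}" using lipmono_dq[OF F, of "1 / Suc n" u] by simp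
    then show "norm (s n u) \<le> w u" using K unfolding s_def w_def by (auto simp: indicator_def)
  qed
  have "integrable lborel f"
    apply (rule integrable_dominated_convergence[of f lborel s w])
    apply (rule fm)
    apply (rule sm)
    apply (rule wi)
    apply (rule lim)
    apply (rule bound)
    done
  then show "set_integrable lborel {a..b} (\<lambda>u. \<phi> (pd F u))" unfolding set_integrable_def f_def .
  have "(\<lambda>n. integral\<^sup>L lborel (s n)) \<longlonglongrightarrow> integral\<^sup>L lborel f"
    using fm sm wi lim bound by (rule integral_dominated_convergence)
  then show "(\<lambda>n. LBINT u:{a..b}. \<phi> (dq F u (1 / Suc n))) \<longlonglongrightarrow> (LBINT u:{a..b}. \<phi> (pd F u))"
    unfolding set_lebesgue_integral_def s_def f_def .
qed

lemma pd_ftc: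
  assumes F: "lipmono F" and ab: "a \<le> b"
  shows "set_integrable lborel {a..b} (pd F)" "(LBINT u:{a..b}. pd F u) = F b - F a"
proof -
  have c: "continuous_on UNIV (\<lambda>t::real. t)" by (rule continuous_on_id)
  show "set_integrable lborel {a..b} (pd F)" using pd_dc(1)[OF F ab c] by simp
  show "(LBINT u:{a..b}. pd F u) = F b - F a"
    using LIMSEQ_unique[OF pd_dc(2)[OF F ab c] dq_integral_tendsto[OF F ab]] .
qed


lemma set_integrable_const_Icc: "set_integrable lborel {a..b::real} (\<lambda>_. c::real)"
  unfolding set_integrable_def by (rule borel_integrable_compact) auto

lemma LBINT_const_Icc: "a \<le> b \<Longrightarrow> (LBINT u:{a..b::real}. (c::real)) = c * (b - a)"
  by (subst set_integral_const) auto

lemma pd_sq_int: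
  assumes F: "lipmono F" and ab: "a \<le> b"
  shows "set_integrable lborel {a..b} (\<lambda>u. (pd F u)^2)"
  using pd_dc(1)[OF F ab, of "\<lambda>t. t^2"] by (simp add: continuous_on_power continuous_on_id)

lemma alg_cs: "(L::real) \<noteq> 0 \<Longrightarrow> 2 * (D / L) * D - (D / L)^2 * L = D^2 / L"
  by (simp add: field_simps power2_eq_square)

lemma cs_identity:
  assumes F: "lipmono F" and ab: "a < b"
  defines "c \<equiv> (F b - F a) / (b - a)"
  shows "(LBINT u:{a..b}. (pd F u - c)^2) = (LBINT u:{a..b}. (pd F u)^2) - (F b - F a)^2 / (b - a)"
    and "set_integrable lborel {a..b} (\<lambda>u. (pd F u - c)^2)"
proof -
  have ab': "a \<le> b" using ab by simp
  have i1: "set_integrable lborel {a..b} (\<lambda>u. 2 * c * pd F u)"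
    using pd_ftc(1)[OF F ab'] by (rule set_integrable_mult_right)
  have i2: "set_integrable lborel {a..b} (\<lambda>u. (pd F u)^2)" by (rule pd_sq_int[OF F ab'])
  have i0: "set_integrable lborel {a..b} (\<lambda>u. c^2)" by (rule set_integrable_const_Icc)
  have i3: "set_integrable lborel {a..b} (\<lambda>u. 2 * c * pd F u - c^2)" by (rule set_integral_diff(1)[OF i1 i0])
  have eq: "(\<lambda>u. (pd F u - c)^2) = (\<lambda>u. (pd F u)^2 - (2 * c * pd F u - c^2))"
    by (auto simp: power2_eq_square algebra_simps)
  show "set_integrable lborel {a..b} (\<lambda>u. (pd F u - c)^2)" unfolding eq by (rule set_integral_diff(1)[OF i2 i3])
  have "(LBINT u:{a..b}. (pd F u - c)^2) = (LBINT u:{a..b}. (pd F u)^2) - (LBINT u:{a..b}. 2 * c * pd F u - c^2)"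
    unfolding eq by (rule set_integral_diff(2)[OF i2 i3])
  also have "(LBINT u:{a..b}. 2 * c * pd F u - c^2) = (LBINT u:{a..b}. 2 * c * pd F u) - (LBINT u:{a..b}. c^2)"
    by (rule set_integral_diff(2)[OF i1 i0])
  also have "(LBINT u:{a..b}. 2 * c * pd F u) = 2 * c * (F b - F a)"
    using pd_ftc(2)[OF F ab'] by (simp add: set_integral_mult_right)
  also have "(LBINT u:{a..b}. c^2) = c^2 * (b - a)" using ab' by (rule LBINT_const_Icc)
  also have "2 * c * (F b - F a) - c^2 * (b - a) = (F b - F a)^2 / (b - a)"
    using ab unfolding c_def by (intro alg_cs) simp
  finally show "(LBINT u:{a..b}. (pd F u - c)^2) = (LBINT u:{a..b}. (pd F u)^2) - (F b - F a)^2 / (b - a)" .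
qed

lemma cs_ineq:
  assumes F: "lipmono F" and ab: "a < b"
  shows "(F b - F a)^2 / (b - a) \<le> (LBINT u:{a..b}. (pd F u)^2)"
proof -
  define c where "c = (F b - F a) / (b - a)"
  have "0 \<le> (LBINT u:{a..b}. (pd F u - c)^2)" unfolding set_lebesgue_integral_def
    by (rule Bochner_Integration.integral_nonneg) (simp add: indicator_def)
  then show ?thesis using cs_identity(1)[OF F ab] unfolding c_def by simp
qed

lemma cs_eq:
  assumes F: "lipmono F" and ab: "a < b"
    and eq: "(LBINT u:{a..b}. (pd F u)^2) = (F b - F a)^2 / (b - a)"
    and x: "x \<in> {a..b}"
  shows "F x = F a + (F b - F a) / (b - a) * (x - a)"
proof -
  define c where "c = (F b - F a) / (b - a)"
  have [measurable]: "pd F \<in> borel_measurable borel" by (rule pd_borel[OF F])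
  have "(LBINT u:{a..b}. (pd F u - c)^2) = 0" using cs_identity(1)[OF F ab] eq unfolding c_def by simp
  then have "AE u in lborel. indicator {a..b} u *\<^sub>R (pd F u - c)^2 = 0"
    unfolding set_lebesgue_integral_def
    by (subst (asm) integral_nonneg_eq_0_iff_AE)
       (use cs_identity(2)[OF F ab] in \<open>auto simp: set_integrable_def c_def\<close>)
  then have AE1: "AE u in lborel. u \<in> {a..x} \<longrightarrow> pd F u = c"
    by eventually_elim (use x in \<open>auto simp: indicator_def\<close>)
  have "F x - F a = (LBINT u:{a..x}. pd F u)" using pd_ftc(2)[OF F, of a x] x by simp
  also have "\<dots> = (LBINT u:{a..x}. c)"
    by (rule set_lebesgue_integral_cong_AE) (use AE1 in auto)
  also have "\<dots> = c * (x - a)" using x by (intro LBINT_const_Icc) simp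
  finally show ?thesis unfolding c_def by simp
qed


definition clamp :: "real \<Rightarrow> real" where "clamp x = max 0 (min 1 x)"
definition Fv :: "(real \<Rightarrow> real \<Rightarrow> real) \<Rightarrow> real \<Rightarrow> real \<Rightarrow> real" where "Fv C v x = C (clamp x) v"
definition Ival :: "(real \<Rightarrow> real \<Rightarrow> real) \<Rightarrow> real \<Rightarrow> real" where
  "Ival C v = (LBINT u:{0..1}. (pd (Fv C v) u)^2)"

lemma clamp_in: "clamp x \<in> {0..1}" by (auto simp: clamp_def)
lemma clamp_id: "x \<in> {0..1} \<Longrightarrow> clamp x = x" by (auto simp: clamp_def)
lemma clamp_mono: "x \<le> y \<Longrightarrow> clamp x \<le> clamp y" by (auto simp: clamp_def)
lemma clamp_lip: "\<bar>clamp x - clamp y\<bar> \<le> \<bar>x - y\<bar>" by (auto simp: clamp_def)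

lemma cop_bd:
  assumes "is_copula C" "u \<in> {0..1}"
  shows "C u 0 = 0" "C 0 u = 0" "C u 1 = u" "C 1 u = u"
  using assms unfolding is_copula_def by auto

lemma cop_rect:
  assumes "is_copula C" "0 \<le> u1" "u1 \<le> u2" "u2 \<le> 1" "0 \<le> v1" "v1 \<le> v2" "v2 \<le> 1"
  shows "C u2 v2 - C u2 v1 - C u1 v2 + C u1 v1 \<ge> 0"
  using assms unfolding is_copula_def by blast

lemma cop_mono1:
  assumes C: "is_copula C" and "0 \<le> u1" "u1 \<le> u2" "u2 \<le> 1" "0 \<le> v" "v \<le> 1"
  shows "C u1 v \<le> C u2 v" "C u2 v - C u1 v \<le> u2 - u1"
proof -
  have "C u2 v - C u2 0 - C u1 v + C u1 0 \<ge> 0" by (rule cop_rect[OF C]) (use assms in auto)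
  then show "C u1 v \<le> C u2 v" using cop_bd[OF C, of u1] cop_bd[OF C, of u2] assms by auto
  have "C u2 1 - C u2 v - C u1 1 + C u1 v \<ge> 0" by (rule cop_rect[OF C]) (use assms in auto)
  then show "C u2 v - C u1 v \<le> u2 - u1" using cop_bd[OF C, of u1] cop_bd[OF C, of u2] assms by auto
qed

lemma cop_mono2:
  assumes C: "is_copula C" and "0 \<le> v1" "v1 \<le> v2" "v2 \<le> 1" "0 \<le> u" "u \<le> 1"
  shows "C u v1 \<le> C u v2" "C u v2 - C u v1 \<le> v2 - v1"
proof -
  have "C u v2 - C u v1 - C 0 v2 + C 0 v1 \<ge> 0" by (rule cop_rect[OF C]) (use assms in auto)
  then show "C u v1 \<le> C u v2" using cop_bd[OF C, of v1] cop_bd[OF C, of v2] assms by auto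
  have "C 1 v2 - C 1 v1 - C u v2 + C u v1 \<ge> 0" by (rule cop_rect[OF C]) (use assms in auto)
  then show "C u v2 - C u v1 \<le> v2 - v1" using cop_bd[OF C, of v1] cop_bd[OF C, of v2] assms by auto
qed

lemma cop_lip1:
  assumes C: "is_copula C" "u \<in> {0..1}" "u' \<in> {0..1}" "v \<in> {0..1}"
  shows "\<bar>C u v - C u' v\<bar> \<le> \<bar>u - u'\<bar>"
proof (cases "u \<le> u'")
  case True then show ?thesis using cop_mono1[OF C(1), of u u' v] assms by auto
next
  case False then show ?thesis using cop_mono1[OF C(1), of u' u v] assms by auto
qed

lemma cop_lip2:
  assumes C: "is_copula C" "u \<in> {0..1}" "v \<in> {0..1}" "v' \<in> {0..1}"
  shows "\<bar>C u v - C u v'\<bar> \<le> \<bar>v - v'\<bar>"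
proof (cases "v \<le> v'")
  case True then show ?thesis using cop_mono2[OF C(1), of v v' u] assms by auto
next
  case False then show ?thesis using cop_mono2[OF C(1), of v' v u] assms by auto
qed

lemma cop_nonneg:
  assumes C: "is_copula C" "u \<in> {0..1}" "v \<in> {0..1}"
  shows "0 \<le> C u v"
  using cop_mono2[OF C(1), of 0 v u] cop_bd[OF C(1), of u] assms by auto

lemma lipmono_Fv:
  assumes C: "is_copula C" and v: "v \<in> {0..1}"
  shows "lipmono (Fv C v)"
  unfolding lipmono_def
proof safe
  show "mono (Fv C v)"
    unfolding mono_def Fv_def
    using cop_mono1(1)[OF C] clamp_in clamp_mono v by (meson atLeastAtMost_iff)
  fix x y
  have "\<bar>C (clamp x) v - C (clamp y) v\<bar> \<le> \<bar>clamp x - clamp y\<bar>"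
    by (rule cop_lip1[OF C clamp_in clamp_in v])
  also have "\<dots> \<le> \<bar>x - y\<bar>" by (rule clamp_lip)
  finally show "\<bar>Fv C v x - Fv C v y\<bar> \<le> \<bar>x - y\<bar>" by (simp add: Fv_def)
qed

lemma Fv_id: "x \<in> {0..1} \<Longrightarrow> Fv C v x = C x v" by (simp add: Fv_def clamp_id)

lemma pd_local:
  assumes "open S" "u \<in> S" "\<And>x. x \<in> S \<Longrightarrow> f x = g x"
  shows "pd f u = pd g u"
proof -
  have *: "pd f u = pd g u" if "f differentiable (at u)" "open S" "u \<in> S" "\<And>x. x \<in> S \<Longrightarrow> f x = g x" for f g
  proof -
    have "(f has_real_derivative deriv f u) (at u)" using that(1) by (simp add: DERIV_deriv_iff_real_differentiable)
    then have D: "(g has_real_derivative deriv f u) (at u)"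
      by (rule has_field_derivative_transform_within_open) (use that in auto)
    then have "g differentiable (at u)" by (auto simp: differentiable_def has_field_derivative_def)
    moreover have "deriv g u = deriv f u" using D by (rule DERIV_imp_deriv)
    ultimately show ?thesis using that(1) by (simp add: pd_def)
  qed
  show ?thesis
  proof (cases "f differentiable (at u)")
    case True then show ?thesis using * assms by blast
  next
    case False
    show ?thesis
    proof (cases "g differentiable (at u)")
      case True
      have "pd g u = pd f u" by (rule *[OF True assms(1,2)]) (simp add: assms(3))
      then show ?thesis by simp
    next
      case False then show ?thesis using \<open>\<not> f differentiable (at u)\<close> by (simp add: pd_def)
    qed
  qed
qed

lemma partial1_pd: "u \<in> {0<..<1} \<Longrightarrow> partial1 C u v = pd (Fv C v) u"
proof -
  assume u: "u \<in> {0<..<1}"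
  have "partial1 C u v = pd (\<lambda>x. C x v) u" by (simp add: partial1_def pd_def)
  also have "\<dots> = pd (Fv C v) u" by (rule pd_local[of "{0<..<1}"]) (use u in \<open>auto simp: Fv_id\<close>)
  finally show ?thesis .
qed

lemma inner_eq: "(LBINT u:{0..1}. (partial1 C u v)^2) = Ival C v"
  unfolding Ival_def set_lebesgue_integral_def
  by (rule integral_discrete_difference[of "{0,1}"]) (auto simp: partial1_pd indicator_def)

lemma xi_Ival: "xi C = 6 * (LBINT v:{0..1}. Ival C v) - 2"
  unfolding xi_def inner_eq ..


definition Gc :: "(real \<Rightarrow> real \<Rightarrow> real) \<Rightarrow> real \<times> real \<Rightarrow> real" where
  "Gc C p = C (clamp (fst p)) (clamp (snd p))"

lemma Gc_lip:
  assumes C: "is_copula C"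
  shows "\<bar>Gc C p - Gc C q\<bar> \<le> 2 * dist p q"
proof -
  have "\<bar>Gc C p - Gc C q\<bar> \<le> \<bar>C (clamp (fst p)) (clamp (snd p)) - C (clamp (fst q)) (clamp (snd p))\<bar>
      + \<bar>C (clamp (fst q)) (clamp (snd p)) - C (clamp (fst q)) (clamp (snd q))\<bar>"
    unfolding Gc_def by linarith
  also have "\<dots> \<le> \<bar>clamp (fst p) - clamp (fst q)\<bar> + \<bar>clamp (snd p) - clamp (snd q)\<bar>"
    by (intro add_mono cop_lip1[OF C clamp_in clamp_in clamp_in] cop_lip2[OF C clamp_in clamp_in clamp_in])
  also have "\<dots> \<le> dist (fst p) (fst q) + dist (snd p) (snd q)"
    using clamp_lip by (intro add_mono) (auto simp: dist_real_def)
  also have "\<dots> \<le> dist p q + dist p q" by (intro add_mono dist_fst_le dist_snd_le)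
  finally show ?thesis by simp
qed

lemma Gc_cont:
  assumes C: "is_copula C"
  shows "continuous_on UNIV (Gc C)"
  unfolding continuous_on_iff
proof (intro ballI allI impI)
  fix x :: "real \<times> real" and e :: real assume e: "e > 0"
  show "\<exists>d>0. \<forall>x'\<in>UNIV. dist x' x < d \<longrightarrow> dist (Gc C x') (Gc C x) < e"
  proof (intro exI[of _ "e / 2"] conjI ballI impI)
    fix x' assume "dist x' x < e / 2"
    then show "dist (Gc C x') (Gc C x) < e" using Gc_lip[OF C, of x' x] by (simp add: dist_real_def)
  qed (use e in auto)
qed

lemma Gc_Fv: "v \<in> {0..1} \<Longrightarrow> (\<lambda>x. Gc C (x, v)) = Fv C v"
  by (auto simp: Gc_def Fv_def clamp_id fun_eq_iff)

lemma J_meas: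
  assumes C: "is_copula C" and h: "h \<noteq> 0"
  shows "(\<lambda>v. LBINT u:{0..1}. (dq (\<lambda>x. Gc C (x, v)) u h)^2) \<in> borel_measurable lborel"
proof -
  define H where "H p = (dq (\<lambda>x. Gc C (x, fst p)) (snd p) h)^2" for p :: "real \<times> real"
  have c1: "continuous_on UNIV (\<lambda>p::real\<times>real. Gc C (snd p + h, fst p))"
    by (rule continuous_on_compose2[OF Gc_cont[OF C]]) (auto intro!: continuous_intros)
  have c2: "continuous_on UNIV (\<lambda>p::real\<times>real. Gc C (snd p, fst p))"
    by (rule continuous_on_compose2[OF Gc_cont[OF C]]) (auto intro!: continuous_intros)
  have "continuous_on UNIV H"
    unfolding H_def dq_def by (intro continuous_intros c1 c2) (use h in auto)
  then have [measurable]: "H \<in> borel_measurable borel" by (rule borel_measurable_continuous_onI)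
  have "(indicator (UNIV \<times> {0..1::real}) :: real \<times> real \<Rightarrow> real) \<in> borel_measurable borel"
    by (intro borel_measurable_indicator borel_closed closed_Times) auto
  moreover have "(indicator (UNIV \<times> {0..1::real}) :: real \<times> real \<Rightarrow> real) = (\<lambda>p::real\<times>real. indicator {0..1} (snd p) :: real)"
    by (auto simp: indicator_def fun_eq_iff)
  ultimately have "(\<lambda>p::real\<times>real. indicator {0..1} (snd p) :: real) \<in> borel_measurable borel" by simp
  then have "(\<lambda>p::real\<times>real. indicator {0..1} (snd p) *\<^sub>R H p) \<in> borel_measurable borel"
    by (rule borel_measurable_scaleR) simp
  then have "(\<lambda>p::real\<times>real. indicator {0..1} (snd p) *\<^sub>R H p) \<in> borel_measurable (lborel \<Otimes>\<^sub>M lborel)"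
    unfolding lborel_prod by simp
  then have "case_prod (\<lambda>v u. indicator {0..1} u *\<^sub>R H (v, u)) \<in> borel_measurable (lborel \<Otimes>\<^sub>M lborel)"
    by (simp add: case_prod_beta')
  from lborel.borel_measurable_lebesgue_integral[OF this]
  show ?thesis unfolding set_lebesgue_integral_def H_def by simp
qed

lemma Ival_lim:
  assumes C: "is_copula C" and v: "v \<in> {0..1}"
  shows "(\<lambda>n. LBINT u:{0..1}. (dq (\<lambda>x. Gc C (x, v)) u (1 / Suc n))^2) \<longlonglongrightarrow> Ival C v"
  unfolding Gc_Fv[OF v] Ival_def
  by (rule pd_dc(2)[OF lipmono_Fv[OF C v]]) (auto intro!: continuous_intros)

lemma Ival_meas:
  assumes C: "is_copula C"
  shows "(\<lambda>v. indicator {0..1} v * Ival C v) \<in> borel_measurable lborel"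
proof (rule borel_measurable_LIMSEQ_real)
  fix v
  show "(\<lambda>n. indicator {0..1} v * (LBINT u:{0..1}. (dq (\<lambda>x. Gc C (x, v)) u (1 / Suc n))^2)) \<longlonglongrightarrow> indicator {0..1} v * Ival C v"
  proof (cases "v \<in> {0..1}")
    case True then show ?thesis using Ival_lim[OF C True] by simp
  next
    case False then show ?thesis by simp
  qed
next
  fix n
  show "(\<lambda>v. indicator {0..1} v * (LBINT u:{0..1}. (dq (\<lambda>x. Gc C (x, v)) u (1 / Suc n))^2)) \<in> borel_measurable lborel"
  proof -
    have [measurable]: "(\<lambda>v. LBINT u:{0..1}. (dq (\<lambda>x. Gc C (x, v)) u (1 / Suc n))^2) \<in> borel_measurable lborel"
      by (rule J_meas[OF C]) simp
    show ?thesis by measurable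
  qed
qed

lemma Ival_bounds:
  assumes C: "is_copula C" and v: "v \<in> {0..1}"
  shows "0 \<le> Ival C v" "Ival C v \<le> 1"
proof -
  have F: "lipmono (Fv C v)" by (rule lipmono_Fv[OF C v])
  show "0 \<le> Ival C v" unfolding Ival_def set_lebesgue_integral_def
    by (rule Bochner_Integration.integral_nonneg) (simp add: indicator_def)
  have i: "set_integrable lborel {0..1} (\<lambda>u. (pd (Fv C v) u)^2)" by (rule pd_sq_int[OF F]) simp
  have "Ival C v \<le> (LBINT u:{0..1::real}. (1::real))" unfolding Ival_def
  proof (rule set_integral_mono[OF i set_integrable_const_Icc])
    fix u
    have "0 \<le> pd (Fv C v) u" "pd (Fv C v) u \<le> 1" using pd_bounds[OF F] by auto
    then show "(pd (Fv C v) u)^2 \<le> 1" by (simp add: power_le_one)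
  qed
  also have "\<dots> = 1" by (subst LBINT_const_Icc) auto
  finally show "Ival C v \<le> 1" .
qed

lemma Ival_int:
  assumes C: "is_copula C"
  shows "set_integrable lborel {0..1} (Ival C)"
  unfolding set_integrable_def
proof (rule Bochner_Integration.integrable_bound)
  show "integrable lborel (\<lambda>v::real. indicat_real {0..1} v *\<^sub>R (1::real))"
    by (rule borel_integrable_compact) auto
  show "(\<lambda>v. indicat_real {0..1} v *\<^sub>R Ival C v) \<in> borel_measurable lborel"
    using Ival_meas[OF C] by simp
  show "AE v in lborel. norm (indicat_real {0..1} v *\<^sub>R Ival C v) \<le> norm (indicat_real {0..1} v *\<^sub>R (1::real))"
    using Ival_bounds[OF C] by (auto simp: indicator_def)
qed


definition mh :: "real \<Rightarrow> real" where "mh v = max 0 (v - 1/2)"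
definition phi :: "real \<Rightarrow> real" where "phi v = 2 * (mh v)^2 + 2 * (v - mh v)^2"

lemma half_sq: "(1/2::real)^2 = 1/4" by (simp add: power2_eq_square)

lemma half_cube: "(1/2::real)^3 = 1/8" by (simp add: power3_eq_cube)

lemma mh_cont: "continuous_on S mh"
  unfolding mh_def by (intro continuous_intros)

lemma phi_cont: "continuous_on S phi"
  unfolding phi_def by (intro continuous_intros mh_cont)

lemma split_Icc:
  fixes f :: "real \<Rightarrow> real"
  assumes f: "set_integrable lborel {a..c} f" and ab: "a \<le> b" and bc: "b \<le> c"
  shows "(LBINT u:{a..c}. f u) = (LBINT u:{a..b}. f u) + (LBINT u:{b..c}. f u)"
proof -
  have "set_integrable lborel (einterval a c) f"
    by (rule set_integrable_subset[OF f]) auto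
  then have "interval_lebesgue_integrable lborel (ereal a) (ereal c) f"
    unfolding interval_lebesgue_integrable_def using ab bc by simp
  then have "(LBINT u=a..b. f u) + (LBINT u=b..c. f u) = (LBINT u=a..c. f u)"
    using ab bc by (intro interval_integral_sum) (simp add: min_def max_def)
  then show ?thesis using ab bc by (simp add: interval_integral_Icc)
qed

lemma ftc_Icc:
  fixes f G :: "real \<Rightarrow> real"
  assumes ab: "a \<le> b" and f: "continuous_on {a..b} f" and G: "\<And>x. (G has_real_derivative f x) (at x)"
  shows "(LBINT u:{a..b}. f u) = G b - G a"
proof -
  have "(LBINT u=a..b. f u) = G b - G a"
    by (rule interval_integral_FTC_finite)
       (use ab f G in \<open>auto simp: has_real_derivative_iff_has_vector_derivative[symmetric] intro: has_field_derivative_at_within\<close>)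
  then show ?thesis using ab by (simp add: interval_integral_Icc)
qed

lemma set_integral_cong_Icc:
  "(\<And>x. x \<in> {a..b} \<Longrightarrow> f x = g x) \<Longrightarrow> (LBINT u:{a..b::real}. f u) = (LBINT u:{a..b}. (g u::real))"
  unfolding set_lebesgue_integral_def by (rule Bochner_Integration.integral_cong) (auto simp: indicator_def)

lemma int_mh: "(LBINT u:{0..1}. 2 * mh u) = 1/4"
proof -
  have i: "set_integrable lborel {0..1} (\<lambda>u. 2 * mh u)"
    unfolding set_integrable_def by (rule borel_integrable_compact) (auto intro!: continuous_intros mh_cont)
  have "(LBINT u:{0..1}. 2 * mh u) = (LBINT u:{0..1/2}. 2 * mh u) + (LBINT u:{1/2..1}. 2 * mh u)"
    by (rule split_Icc[OF i]) auto
  also have "(LBINT u:{0..1/2}. 2 * mh u) = (LBINT u:{0..1/2::real}. (0::real))"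
    by (rule set_integral_cong_Icc) (auto simp: mh_def)
  also have "\<dots> = 0" by (subst LBINT_const_Icc) auto
  also have "(LBINT u:{1/2..1}. 2 * mh u) = (LBINT u:{1/2..1}. 2 * u - 1)"
    by (rule set_integral_cong_Icc) (auto simp: mh_def)
  also have "\<dots> = (1^2 - 1) - ((1/2)^2 - 1/2)"
    by (rule ftc_Icc[where G="\<lambda>u. u^2 - u"]) (auto intro!: continuous_intros derivative_eq_intros simp: half_sq power2_eq_square power3_eq_cube field_simps)
  finally show ?thesis by (simp add: half_sq)
qed

lemma int_phi: "(LBINT u:{0..1}. phi u) = 5/12"
proof -
  have i: "set_integrable lborel {0..1} phi"
    unfolding set_integrable_def by (rule borel_integrable_compact) (auto intro!: phi_cont)
  have "(LBINT u:{0..1}. phi u) = (LBINT u:{0..1/2}. phi u) + (LBINT u:{1/2..1}. phi u)"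
    by (rule split_Icc[OF i]) auto
  also have "(LBINT u:{0..1/2}. phi u) = (LBINT u:{0..1/2}. 2 * u^2)"
    by (rule set_integral_cong_Icc) (auto simp: phi_def mh_def)
  also have "\<dots> = 2 * (1/2)^3 / 3 - 2 * 0^3 / 3"
    by (rule ftc_Icc[where G="\<lambda>u. 2 * u^3 / 3"]) (auto intro!: continuous_intros derivative_eq_intros simp: half_sq power2_eq_square power3_eq_cube field_simps)
  also have "(LBINT u:{1/2..1}. phi u) = (LBINT u:{1/2..1}. 2 * (u - 1/2)^2 + 1/2)"
    by (rule set_integral_cong_Icc) (auto simp: phi_def mh_def half_sq)
  also have "\<dots> = (2 * (1 - 1/2)^3 / 3 + 1 / 2) - (2 * (1/2 - 1/2)^3 / 3 + (1/2) / 2)"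
    by (rule ftc_Icc[where G="\<lambda>u. 2 * (u - 1/2)^3 / 3 + u / 2"]) (auto intro!: continuous_intros derivative_eq_intros simp: half_sq power2_eq_square power3_eq_cube field_simps)
  finally show ?thesis by (simp add: half_cube)
qed


definition Csf :: "real \<Rightarrow> real \<Rightarrow> real" where
  "Csf x v = 2 * mh v * (x - mh x) + 2 * (v - mh v) * mh x"

lemma LBINT_ind_comb:
  assumes A: "A \<in> sets borel" "emeasure lborel A < \<infinity>" and B: "B1 \<in> sets borel" "B2 \<in> sets borel"
  shows "(LBINT t:A. c1 * indicator B1 t + c2 * indicator B2 t) = c1 * measure lborel (A \<inter> B1) + c2 * measure lborel (A \<inter> B2)"
proof -
  have fin: "emeasure lborel (A \<inter> B) < \<infinity>" for B
    using emeasure_mono[of "A \<inter> B" A lborel] A by auto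
  have i1: "integrable lborel (indicat_real (A \<inter> B1))" by (rule integrable_real_indicator) (use A B fin in auto)
  have i2: "integrable lborel (indicat_real (A \<inter> B2))" by (rule integrable_real_indicator) (use A B fin in auto)
  have eq: "(\<lambda>t. indicator A t *\<^sub>R (c1 * indicator B1 t + c2 * indicator B2 t)) =
      (\<lambda>t. c1 * indicat_real (A \<inter> B1) t + c2 * indicat_real (A \<inter> B2) t)"
    by (auto simp: fun_eq_iff indicator_def)
  show ?thesis unfolding set_lebesgue_integral_def eq
    using i1 i2 by (simp add: Bochner_Integration.integral_add integral_mult_right_zero)
qed

lemma meas1: "x \<in> {0..1} \<Longrightarrow> measure lborel ({0..x} \<inter> {1/2..1}) = mh x"
proof -
  assume x: "x \<in> {0..1}"
  show ?thesis
  proof (cases "x \<ge> 1/2")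
    case True
    then have "{0..x} \<inter> {1/2..1} = {1/2..x}" using x by auto
    then show ?thesis using True by (simp add: mh_def)
  next
    case False
    then have "{0..x} \<inter> {1/2..1} = {}" using x by auto
    then show ?thesis using False by (simp add: mh_def)
  qed
qed

lemma meas2: "x \<in> {0..1} \<Longrightarrow> measure lborel ({0..x} \<inter> {0..<1/2}) = x - mh x"
proof -
  assume x: "x \<in> {0..1}"
  show ?thesis
  proof (cases "x \<ge> 1/2")
    case True
    then have "{0..x} \<inter> {0..<1/2} = {0..<1/2}" using x by auto
    then show ?thesis using True by (simp add: mh_def)
  next
    case False
    then have "{0..x} \<inter> {0..<1/2} = {0..x}" using x by auto
    then show ?thesis using False x by (simp add: mh_def)
  qed
qed

lemma csharp_inner:
  assumes v: "v \<in> {0..1}"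
  shows "(LBINT t:{0..v}. csharp_density s t) = 2 * mh v * indicator {0..<1/2} s + 2 * (v - mh v) * indicator {1/2..1} s"
proof -
  have "(LBINT t:{0..v}. csharp_density s t) =
      (LBINT t:{0..v}. (2 * indicator {0..<1/2} s) * indicator {1/2..1} t + (2 * indicator {1/2..1} s) * indicator {0..<1/2} t)"
    by (rule set_integral_cong_Icc) (simp add: csharp_density_def algebra_simps)
  also have "\<dots> = (2 * indicator {0..<1/2} s) * measure lborel ({0..v} \<inter> {1/2..1}) + (2 * indicator {1/2..1} s) * measure lborel ({0..v} \<inter> {0..<1/2})"
    by (rule LBINT_ind_comb) (auto simp: emeasure_lborel_Icc_eq)
  finally show ?thesis using meas1[OF v] meas2[OF v] by simp
qed

lemma Csharp_formula:
  assumes u: "u \<in> {0..1}" and v: "v \<in> {0..1}"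
  shows "Csharp u v = Csf u v"
proof -
  have "Csharp u v = (LBINT s:{0..u}. (2 * mh v) * indicator {0..<1/2} s + (2 * (v - mh v)) * indicator {1/2..1} s)"
    unfolding Csharp_def by (rule set_integral_cong_Icc) (simp add: csharp_inner[OF v])
  also have "\<dots> = (2 * mh v) * measure lborel ({0..u} \<inter> {0..<1/2}) + (2 * (v - mh v)) * measure lborel ({0..u} \<inter> {1/2..1})"
    by (rule LBINT_ind_comb) (auto simp: emeasure_lborel_Icc_eq)
  finally show ?thesis using meas1[OF u] meas2[OF u] by (simp add: Csf_def)
qed

lemma mh_mono: "x \<le> y \<Longrightarrow> mh x \<le> mh y" by (auto simp: mh_def)
lemma mh_mono2: "x \<le> y \<Longrightarrow> x - mh x \<le> y - mh y" by (auto simp: mh_def)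

lemma Csharp_copula: "is_copula Csharp"
  unfolding is_copula_def
proof (intro conjI ballI allI impI)
  fix u :: real assume u: "u \<in> {0..1}"
  have z: "(0::real) \<in> {0..1}" "(1::real) \<in> {0..1}" by auto
  show "Csharp u 0 = 0" "Csharp 0 u = 0" "Csharp u 1 = u" "Csharp 1 u = u"
    using Csharp_formula[OF u z(1)] Csharp_formula[OF z(1) u] Csharp_formula[OF u z(2)] Csharp_formula[OF z(2) u]
    by (auto simp: Csf_def mh_def algebra_simps)
next
  fix u1 u2 v1 v2 :: real
  assume H: "0 \<le> u1 \<and> u1 \<le> u2 \<and> u2 \<le> 1 \<and> 0 \<le> v1 \<and> v1 \<le> v2 \<and> v2 \<le> 1"
  then have m: "u1 \<in> {0..1}" "u2 \<in> {0..1}" "v1 \<in> {0..1}" "v2 \<in> {0..1}" by auto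
  have eq: "Csharp u2 v2 - Csharp u2 v1 - Csharp u1 v2 + Csharp u1 v1 =
    2 * ((u2 - mh u2) - (u1 - mh u1)) * (mh v2 - mh v1) + 2 * (mh u2 - mh u1) * ((v2 - mh v2) - (v1 - mh v1))"
    using m by (simp add: Csharp_formula Csf_def algebra_simps)
  have "0 \<le> 2 * ((u2 - mh u2) - (u1 - mh u1)) * (mh v2 - mh v1)"
    using mh_mono[of v1 v2] mh_mono2[of u1 u2] H by (intro mult_nonneg_nonneg) auto
  moreover have "0 \<le> 2 * (mh u2 - mh u1) * ((v2 - mh v2) - (v1 - mh v1))"
    using mh_mono[of u1 u2] mh_mono2[of v1 v2] H by (intro mult_nonneg_nonneg) auto
  ultimately show "Csharp u2 v2 - Csharp u2 v1 - Csharp u1 v2 + Csharp u1 v1 \<ge> 0" unfolding eq by simp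
qed

lemma Csf_diag: "Csf u u = 2 * mh u"
  by (cases "u \<ge> 1/2") (auto simp: Csf_def mh_def algebra_simps)

lemma psi_Csharp: "psi Csharp = - 1/2"
proof -
  have "(LBINT u:{0..1}. Csharp u u) = (LBINT u:{0..1}. 2 * mh u)"
    by (rule set_integral_cong_Icc) (simp add: Csharp_formula Csf_diag)
  then show ?thesis unfolding psi_def int_mh by simp
qed

lemma pd_affine: "pd (\<lambda>x. a * x + b) u = a"
proof -
  have D: "((\<lambda>x. a * x + b) has_real_derivative a) (at u)" by (auto intro!: derivative_eq_intros)
  then have "(\<lambda>x. a * x + b) differentiable (at u)" by (auto simp: differentiable_def has_field_derivative_def)
  then show ?thesis using DERIV_imp_deriv[OF D] by (simp add: pd_def)
qed

lemma half_int:
  fixes g :: "real \<Rightarrow> real" and a b k :: real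
  assumes "a < b" "\<And>u. u \<in> {a<..<b} \<Longrightarrow> g u = k"
  shows "(LBINT u:{a..b}. (g u)^2) = k^2 * (b - a)"
proof -
  have "(LBINT u:{a..b}. (g u)^2) = (LBINT u:{a..b}. k^2)"
    unfolding set_lebesgue_integral_def
  proof (rule integral_discrete_difference[of "{a,b}"])
    fix x assume "x \<notin> {a, b}"
    then show "indicator {a..b} x *\<^sub>R (g x)^2 = indicator {a..b} x *\<^sub>R k^2"
    proof (cases "x \<in> {a..b}")
      case True
      then have "a < x" "x < b" using \<open>x \<notin> {a, b}\<close> by auto
      then show ?thesis using assms(2)[of x] by simp
    qed simp
  qed auto
  also have "\<dots> = k^2 * (b - a)" using assms(1) by (intro LBINT_const_Icc) simp
  finally show ?thesis .
qed

lemma Ival_Csharp: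
  assumes v: "v \<in> {0..1}"
  shows "Ival Csharp v = phi v"
proof -
  define F where "F = Fv Csharp v"
  have F: "lipmono F" unfolding F_def by (rule lipmono_Fv[OF Csharp_copula v])
  have p1: "pd F u = 2 * mh v" if "u \<in> {0<..<1/2}" for u
  proof -
    have "pd F u = pd (\<lambda>x. (2 * mh v) * x + 0) u"
      by (rule pd_local[of "{0<..<1/2}"]) (use that v in \<open>auto simp: F_def Fv_id Csharp_formula Csf_def mh_def\<close>)
    then show ?thesis using pd_affine[of "2 * mh v" 0 u] by simp
  qed
  have p2: "pd F u = 2 * (v - mh v)" if "u \<in> {1/2<..<1}" for u
  proof -
    have "pd F u = pd (\<lambda>x. (2 * (v - mh v)) * x + (mh v - (v - mh v))) u"
      by (rule pd_local[of "{1/2<..<1}"]) (use that v in \<open>auto simp: F_def Fv_id Csharp_formula Csf_def mh_def algebra_simps\<close>)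
    then show ?thesis using pd_affine[of "2 * (v - mh v)" "mh v - (v - mh v)" u] by simp
  qed
  have "Ival Csharp v = (LBINT u:{0..1/2}. (pd F u)^2) + (LBINT u:{1/2..1}. (pd F u)^2)"
    unfolding Ival_def F_def[symmetric] by (rule split_Icc[OF pd_sq_int[OF F]]) auto
  also have "(LBINT u:{0..1/2}. (pd F u)^2) = (2 * mh v)^2 * (1/2 - 0)" by (rule half_int) (use p1 in auto)
  also have "(LBINT u:{1/2..1}. (pd F u)^2) = (2 * (v - mh v))^2 * (1 - 1/2)" by (rule half_int) (use p2 in auto)
  finally show ?thesis by (simp add: phi_def power2_eq_square algebra_simps)
qed

lemma xi_Csharp: "xi Csharp = 1/2"
proof -
  have "(LBINT v:{0..1}. Ival Csharp v) = (LBINT v:{0..1}. phi v)"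
    by (rule set_integral_cong_Icc) (simp add: Ival_Csharp)
  then show ?thesis unfolding xi_Ival int_phi by simp
qed


lemma diag_lip:
  assumes C: "is_copula C" and u: "u \<in> {0..1}" and w: "w \<in> {0..1}"
  shows "\<bar>C u u - C w w\<bar> \<le> 2 * \<bar>u - w\<bar>"
proof -
  have "\<bar>C u u - C w w\<bar> \<le> \<bar>C u u - C w u\<bar> + \<bar>C w u - C w w\<bar>" by linarith
  also have "\<dots> \<le> \<bar>u - w\<bar> + \<bar>u - w\<bar>"
    by (intro add_mono cop_lip1[OF C u w u] cop_lip2[OF C w u w])
  finally show ?thesis by simp
qed

lemma diag_cont:
  assumes C: "is_copula C"
  shows "continuous_on {0..1} (\<lambda>u. C u u)"
  unfolding continuous_on_iff
proof (intro ballI allI impI)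
  fix x e :: real assume x: "x \<in> {0..1}" and e: "e > 0"
  show "\<exists>d>0. \<forall>x'\<in>{0..1}. dist x' x < d \<longrightarrow> dist (C x' x') (C x x) < e"
  proof (intro exI[of _ "e / 2"] conjI ballI impI)
    fix x' :: real assume x': "x' \<in> {0..1}" and d: "dist x' x < e / 2"
    show "dist (C x' x') (C x x) < e" using diag_lip[OF C x' x] d by (simp add: dist_real_def)
  qed (use e in auto)
qed

lemma diag_lower:
  assumes C: "is_copula C" and u: "u \<in> {0..1}"
  shows "2 * mh u \<le> C u u"
proof -
  have "C 1 1 - C 1 u - C u 1 + C u u \<ge> 0" by (rule cop_rect[OF C]) (use u in auto)
  then have "2 * u - 1 \<le> C u u" using cop_bd[OF C u] cop_bd[OF C, of 1] by simp
  moreover have "0 \<le> C u u" by (rule cop_nonneg[OF C u u])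
  ultimately show ?thesis by (simp add: mh_def max_def)
qed

lemma psi_half:
  assumes C: "is_copula C" and ps: "psi C = - 1/2"
  shows "C (1/2) (1/2) = 0"
proof (rule ccontr)
  define c where "c = C (1/2) (1/2)"
  assume "C (1/2) (1/2) \<noteq> 0"
  moreover have "0 \<le> c" unfolding c_def by (rule cop_nonneg[OF C]) auto
  ultimately have c0: "0 < c" unfolding c_def by simp
  have "c \<le> C 1 (1/2)" unfolding c_def by (rule cop_mono1(1)[OF C]) auto
  then have c1: "c \<le> 1/2" using cop_bd[OF C, of "1/2"] by simp
  define J where "J = {1/2 - c/8 .. 1/2 + c/8}"
  have J01: "J \<subseteq> {0..1}" using c0 c1 by (auto simp: J_def)
  have int14: "(LBINT u:{0..1}. C u u) = 1/4" using ps unfolding psi_def by simp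
  have idiag: "set_integrable lborel {0..1} (\<lambda>u. C u u)"
    unfolding set_integrable_def by (rule borel_integrable_compact[OF _ diag_cont[OF C]]) auto
  have imh: "set_integrable lborel {0..1} (\<lambda>u. 2 * mh u)"
    unfolding set_integrable_def by (rule borel_integrable_compact) (auto intro!: continuous_intros mh_cont)
  have iJ: "integrable lborel (indicat_real J)" by (rule integrable_real_indicator) (auto simp: J_def emeasure_lborel_Icc_eq)
  have iJ': "set_integrable lborel {0..1} (\<lambda>u. c / 2 * indicator J u)"
  proof -
    have "(\<lambda>u. indicator {0..1} u *\<^sub>R (c / 2 * indicator J u)) = (\<lambda>u. c / 2 * indicat_real J u)"
      using J01 by (auto simp: fun_eq_iff indicator_def)
    then show ?thesis unfolding set_integrable_def using iJ by simp
  qed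
  have intJ: "(LBINT u:{0..1}. c / 2 * indicator J u) = c / 2 * (c / 4)"
  proof -
    have "(\<lambda>u. indicator {0..1} u *\<^sub>R (c / 2 * indicator J u)) = (\<lambda>u. c / 2 * indicat_real J u)"
      using J01 by (auto simp: fun_eq_iff indicator_def)
    then have "(LBINT u:{0..1}. c / 2 * indicator J u) = c / 2 * (LINT u|lborel. indicat_real J u)"
      unfolding set_lebesgue_integral_def by simp
    also have "(LINT u|lborel. indicat_real J u) = c / 4" using c0 by (simp add: J_def)
    finally show ?thesis .
  qed
  have "(LBINT u:{0..1}. 2 * mh u + c / 2 * indicator J u) \<le> (LBINT u:{0..1}. C u u)"
  proof (rule set_integral_mono[OF set_integral_add(1)[OF imh iJ'] idiag])
    fix u :: real assume u: "u \<in> {0..1}"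
    show "2 * mh u + c / 2 * indicator J u \<le> C u u"
    proof (cases "u \<in> J")
      case False then show ?thesis using diag_lower[OF C u] by simp
    next
      case True
      then have d1: "1/2 - c/8 \<le> u" "u \<le> 1/2 + c/8" by (auto simp: J_def)
      then have d: "\<bar>u - 1/2\<bar> \<le> c / 8" by arith
      have "\<bar>C u u - c\<bar> \<le> 2 * \<bar>u - 1/2\<bar>" unfolding c_def by (rule diag_lip[OF C u]) auto
      then have e1: "c - C u u \<le> 2 * \<bar>u - 1/2\<bar>" by (simp add: abs_le_iff)
      have "2 * \<bar>u - 1/2\<bar> \<le> 2 * (c / 8)" using d by simp
      then have "C u u \<ge> 3 * c / 4" using e1 by simp
      moreover have "mh u \<le> \<bar>u - 1/2\<bar>" by (simp add: mh_def)
      then have "2 * mh u \<le> c / 4" using d by linarith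
      ultimately show ?thesis using True by simp
    qed
  qed
  also have "(LBINT u:{0..1}. 2 * mh u + c / 2 * indicator J u) = 1/4 + c / 2 * (c / 4)"
    unfolding set_integral_add(2)[OF imh iJ'] int_mh intJ ..
  finally have "c / 2 * (c / 4) \<le> 0" using int14 by simp
  then show False using c0 by (simp add: mult_le_0_iff)
qed

lemma C_half_v:
  assumes C: "is_copula C" and h: "C (1/2) (1/2) = 0" and v: "v \<in> {0..1}"
  shows "C (1/2) v = mh v"
proof (cases "v \<le> 1/2")
  case True
  have "C (1/2) v \<le> C (1/2) (1/2)" by (rule cop_mono2(1)[OF C]) (use v True in auto)
  moreover have "0 \<le> C (1/2) v" by (rule cop_nonneg[OF C]) (use v in auto)
  ultimately show ?thesis using h True by (simp add: mh_def)
next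
  case False
  have "C 1 v - C 1 (1/2) - C (1/2) v + C (1/2) (1/2) \<ge> 0" by (rule cop_rect[OF C]) (use v False in auto)
  moreover have "C 1 1 - C 1 v - C (1/2) 1 + C (1/2) v \<ge> 0" by (rule cop_rect[OF C]) (use v False in auto)
  ultimately show ?thesis using h False v cop_bd[OF C v] cop_bd[OF C, of "1/2"] cop_bd[OF C, of 1]
    by (simp add: mh_def)
qed


lemma ae_near:
  assumes AE: "AE v in lborel. v \<in> {0..1} \<longrightarrow> P v" and v0: "v0 \<in> {0..1::real}" and e: "e > 0"
  shows "\<exists>v\<in>{0..1}. \<bar>v - v0\<bar> < e \<and> P v"
proof (rule ccontr)
  assume H: "\<not> (\<exists>v\<in>{0..1}. \<bar>v - v0\<bar> < e \<and> P v)"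
  define a where "a = max 0 (v0 - e/2)"
  define b where "b = min 1 (v0 + e/2)"
  have ab: "a < b" using v0 e by (auto simp: a_def b_def)
  from AE obtain N where N: "{v \<in> space lborel. \<not> (v \<in> {0..1} \<longrightarrow> P v)} \<subseteq> N" "emeasure lborel N = 0" "N \<in> sets lborel"
    by (auto elim: AE_E)
  have "{a..b} \<subseteq> {v \<in> space lborel. \<not> (v \<in> {0..1} \<longrightarrow> P v)}"
  proof
    fix v assume v: "v \<in> {a..b}"
    then have "v \<in> {0..1}" "\<bar>v - v0\<bar> < e" using e by (auto simp: a_def b_def abs_less_iff)
    then show "v \<in> {v \<in> space lborel. \<not> (v \<in> {0..1} \<longrightarrow> P v)}" using H by auto
  qed
  then have "emeasure lborel {a..b} \<le> emeasure lborel N" using N by (intro emeasure_mono) auto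
  then show False using N(2) ab by simp
qed

lemma Fv_vals:
  assumes C: "is_copula C" and h: "C (1/2) (1/2) = 0" and v: "v \<in> {0..1}"
  shows "Fv C v 0 = 0" "Fv C v (1/2) = mh v" "Fv C v 1 = v"
  using cop_bd[OF C v] C_half_v[OF C h v] by (auto simp: Fv_id)

lemma halves:
  assumes C: "is_copula C" and h: "C (1/2) (1/2) = 0" and v: "v \<in> {0..1}"
  defines "A1 \<equiv> (LBINT u:{0..1/2}. (pd (Fv C v) u)^2)" and "A2 \<equiv> (LBINT u:{1/2..1}. (pd (Fv C v) u)^2)"
  shows "Ival C v = A1 + A2" "2 * (mh v)^2 \<le> A1" "2 * (v - mh v)^2 \<le> A2"
proof -
  have F: "lipmono (Fv C v)" by (rule lipmono_Fv[OF C v])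
  show "Ival C v = A1 + A2" unfolding Ival_def A1_def A2_def
    by (rule split_Icc[OF pd_sq_int[OF F]]) auto
  have "(Fv C v (1/2) - Fv C v 0)^2 / (1/2 - 0) \<le> A1" unfolding A1_def by (rule cs_ineq[OF F]) simp
  then show "2 * (mh v)^2 \<le> A1" using Fv_vals[OF C h v] by simp
  have "(Fv C v 1 - Fv C v (1/2))^2 / (1 - 1/2) \<le> A2" unfolding A2_def by (rule cs_ineq[OF F]) simp
  then show "2 * (v - mh v)^2 \<le> A2" using Fv_vals[OF C h v] by simp
qed

lemma phi_le_Ival:
  assumes C: "is_copula C" and h: "C (1/2) (1/2) = 0" and v: "v \<in> {0..1}"
  shows "phi v \<le> Ival C v"
  using halves[OF C h v] unfolding phi_def by linarith

lemma phi_int: "set_integrable lborel {0..1} phi"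
  unfolding set_integrable_def by (rule borel_integrable_compact) (auto intro!: phi_cont)

lemma xi_ge:
  assumes C: "is_copula C" and ps: "psi C = - 1/2"
  shows "1/2 \<le> xi C"
proof -
  have h: "C (1/2) (1/2) = 0" by (rule psi_half[OF C ps])
  have "(LBINT v:{0..1}. phi v) \<le> (LBINT v:{0..1}. Ival C v)"
    by (rule set_integral_mono[OF phi_int Ival_int[OF C]]) (rule phi_le_Ival[OF C h])
  then show ?thesis unfolding xi_Ival int_phi by simp
qed

lemma good_v:
  assumes C: "is_copula C" and h: "C (1/2) (1/2) = 0" and v: "v \<in> {0..1}" and eq: "Ival C v = phi v"
    and u: "u \<in> {0..1}"
  shows "C u v = Csharp u v"
proof -
  define F where "F = Fv C v"
  have F: "lipmono F" unfolding F_def by (rule lipmono_Fv[OF C v])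
  define A1 where "A1 = (LBINT u:{0..1/2}. (pd F u)^2)"
  define A2 where "A2 = (LBINT u:{1/2..1}. (pd F u)^2)"
  have hv: "Ival C v = A1 + A2" "2 * (mh v)^2 \<le> A1" "2 * (v - mh v)^2 \<le> A2"
    using halves[OF C h v] unfolding A1_def A2_def F_def by auto
  have a1: "A1 = 2 * (mh v)^2" and a2: "A2 = 2 * (v - mh v)^2" using hv eq unfolding phi_def by linarith+
  have vals: "F 0 = 0" "F (1/2) = mh v" "F 1 = v" using Fv_vals[OF C h v] unfolding F_def by auto
  have e1: "(LBINT u:{0..1/2}. (pd F u)^2) = (F (1/2) - F 0)^2 / (1/2 - 0)"
    using a1 vals unfolding A1_def by simp
  have e2: "(LBINT u:{1/2..1}. (pd F u)^2) = (F 1 - F (1/2))^2 / (1 - 1/2)"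
    using a2 vals unfolding A2_def by simp
  have "C u v = F u" using u by (simp add: F_def Fv_id)
  also have "\<dots> = Csf u v"
  proof (cases "u \<le> 1/2")
    case True
    have "F u = F 0 + (F (1/2) - F 0) / (1/2 - 0) * (u - 0)"
      by (rule cs_eq[OF F _ e1]) (use u True in auto)
    then show ?thesis using vals True u by (simp add: Csf_def mh_def)
  next
    case False
    have "F u = F (1/2) + (F 1 - F (1/2)) / (1 - 1/2) * (u - 1/2)"
      by (rule cs_eq[OF F _ e2]) (use u False in auto)
    then show ?thesis using vals False u by (simp add: Csf_def mh_def algebra_simps)
  qed
  also have "\<dots> = Csharp u v" using u v by (simp add: Csharp_formula)
  finally show ?thesis .
qed

lemma xi_eq_imp:
  assumes C: "is_copula C" and ps: "psi C = - 1/2" and xi: "xi C = 1/2"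
  shows "\<forall>u\<in>{0..1}. \<forall>v\<in>{0..1}. C u v = Csharp u v"
proof (intro ballI)
  fix u v0 :: real assume u: "u \<in> {0..1}" and v0: "v0 \<in> {0..1}"
  have h: "C (1/2) (1/2) = 0" by (rule psi_half[OF C ps])
  have iI: "set_integrable lborel {0..1} (Ival C)" by (rule Ival_int[OF C])
  have iD: "set_integrable lborel {0..1} (\<lambda>v. Ival C v - phi v)" by (rule set_integral_diff(1)[OF iI phi_int])
  have "(LBINT v:{0..1}. Ival C v) = 5/12" using xi unfolding xi_Ival by simp
  then have "(LBINT v:{0..1}. Ival C v - phi v) = 0"
    using set_integral_diff(2)[OF iI phi_int] int_phi by simp
  then have "AE v in lborel. indicator {0..1} v *\<^sub>R (Ival C v - phi v) = 0"
    unfolding set_lebesgue_integral_def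
    by (subst (asm) integral_nonneg_eq_0_iff_AE)
       (use iD phi_le_Ival[OF C h] in \<open>auto simp: set_integrable_def indicator_def\<close>)
  then have AE: "AE v in lborel. v \<in> {0..1} \<longrightarrow> (\<forall>u\<in>{0..1}. C u v = Csharp u v)"
    by eventually_elim (auto intro: good_v[OF C h])
  show "C u v0 = Csharp u v0"
  proof (rule ccontr)
    assume ne: "C u v0 \<noteq> Csharp u v0"
    define e where "e = \<bar>C u v0 - Csharp u v0\<bar> / 2"
    have e: "e > 0" using ne by (simp add: e_def)
    obtain v where v: "v \<in> {0..1}" "\<bar>v - v0\<bar> < e" "\<forall>u\<in>{0..1}. C u v = Csharp u v"
      using ae_near[OF AE v0 e] by blast
    have "\<bar>C u v0 - Csharp u v0\<bar> \<le> \<bar>C u v0 - C u v\<bar> + \<bar>Csharp u v - Csharp u v0\<bar>"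
      using v(3) u by simp
    also have "\<dots> \<le> \<bar>v0 - v\<bar> + \<bar>v - v0\<bar>"
      by (intro add_mono cop_lip2[OF C u v0 v(1)] cop_lip2[OF Csharp_copula u v(1) v0])
    also have "\<dots> < 2 * e" using v(2) by simp
    finally show False unfolding e_def by simp
  qed
qed

lemma xi_eq_if:
  assumes C: "\<forall>u\<in>{0..1}. \<forall>v\<in>{0..1}. C u v = Csharp u v"
  shows "xi C = 1/2"
proof -
  have "Fv C v = Fv Csharp v" if "v \<in> {0..1}" for v
    using C that clamp_in by (auto simp: Fv_def fun_eq_iff)
  then have "(LBINT v:{0..1}. Ival C v) = (LBINT v:{0..1}. Ival Csharp v)"
    by (intro set_integral_cong_Icc) (simp add: Ival_def)
  then show ?thesis using xi_Csharp unfolding xi_Ival by simp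
qed

theorem mainTheorem8:
  shows "is_copula Csharp \<and> psi Csharp = - 1/2 \<and> xi Csharp = 1/2 \<and>
    (\<forall>C. is_copula C \<and> psi C = - 1/2 \<longrightarrow>
        xi C \<ge> 1/2 \<and>
        (xi C = 1/2 \<longleftrightarrow> (\<forall>u\<in>{0..1}. \<forall>v\<in>{0..1}. C u v = Csharp u v)))"
  using Csharp_copula psi_Csharp xi_Csharp xi_ge xi_eq_imp xi_eq_if by blast


end
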